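(* Consider the location game $\mathcal L(n,[0,1])$ on the unit segment. (a) If $n\ge2$ is even, then $\operatorname{PoA}(n)=2$. If $n>3$ is odd, then $\operatorname{PoA}(n)=\dfrac{2n}{n+1}$. (b) For $n=2$, $\operatorname{PoS}(n)=2$. For every $n\ge4$, $\operatorname{PoS}(n)=\dfrac{n}{n-2}$.
   Context: Location game $\mathcal L(n,[0,1])$: $n$ players each choose a point of $[0,1]$. Consumers are distributed uniformly (Lebesgue measure $\lambda$) on $[0,1]$, and each shops at a closest occupied location (distance $|x-y|$). Consumers equidistant from several closest occupied locations are split equally among those locations, and the share of a location is split equally among the players located there. Payoff is the mass of consumers attracted. Nash equilibria are pure. Social cost: \[ C(\boldsymbol x)=\int_0^1\min_i|x_i-y|\,dy. \] With $\mathcal E_n$ the (nonempty) set of pure Nash equilibria, \[ \operatorname{PoA}(n)=\frac{\sup_{\boldsymbol x\in\mathcal E_n}C(\boldsymbol x)}{\inf_{\boldsymbol x\in[0,1]^n}C(\boldsymbol x)}, \qquad \operatorname{PoS}(n)=\frac{\inf_{\boldsymbol x\in\mathcal E_n}C(\boldsymbol x)}{\inf_{\boldsymbol x\in[0,1]^n}C(\boldsymbol x)}. \] *)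

theory Defs
  imports "HOL-Analysis.Analysis"
begin

definition profiles :: "nat \<Rightarrow> (nat \<Rightarrow> real) set" where
  "profiles n = {..<n} \<rightarrow>\<^sub>E {0..1}"

definition dmin :: "nat \<Rightarrow> (nat \<Rightarrow> real) \<Rightarrow> real \<Rightarrow> real" where
  "dmin n x y = Min ((\<lambda>i. \<bar>x i - y\<bar>) ` {..<n})"

definition closest :: "nat \<Rightarrow> (nat \<Rightarrow> real) \<Rightarrow> real \<Rightarrow> real set" where
  "closest n x y = {l \<in> x ` {..<n}. \<bar>l - y\<bar> = dmin n x y}"

definition share :: "nat \<Rightarrow> (nat \<Rightarrow> real) \<Rightarrow> nat \<Rightarrow> real \<Rightarrow> real" where
  "share n x i y = (if x i \<in> closest n x y
     then 1 / (real (card (closest n x y)) * real (card {j \<in> {..<n}. x j = x i}))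
     else 0)"

definition payoff :: "nat \<Rightarrow> (nat \<Rightarrow> real) \<Rightarrow> nat \<Rightarrow> real" where
  "payoff n x i = integral {0..1} (share n x i)"

definition is_NE :: "nat \<Rightarrow> (nat \<Rightarrow> real) \<Rightarrow> bool" where
  "is_NE n x \<longleftrightarrow> x \<in> profiles n \<and>
     (\<forall>i<n. \<forall>z\<in>{0..1}. payoff n (x(i := z)) i \<le> payoff n x i)"

definition social_cost :: "nat \<Rightarrow> (nat \<Rightarrow> real) \<Rightarrow> real" where
  "social_cost n x = integral {0..1} (dmin n x)"

definition PoA :: "nat \<Rightarrow> real" where
  "PoA n = Sup (social_cost n ` {x. is_NE n x}) / Inf (social_cost n ` profiles n)"

definition PoS :: "nat \<Rightarrow> real" where
  "PoS n = Inf (social_cost n ` {x. is_NE n x}) / Inf (social_cost n ` profiles n)"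

end

theory Submission
  imports Defs
begin

definition lb :: "real set \<Rightarrow> real \<Rightarrow> real" where
  "lb S l = (if \<exists>s\<in>S. s < l then (l + Max {s\<in>S. s < l}) / 2 else 0)"
definition rb :: "real set \<Rightarrow> real \<Rightarrow> real" where
  "rb S l = (if \<exists>s\<in>S. l < s then (l + Min {s\<in>S. l < s}) / 2 else 1)"

lemma lb_eq: assumes "finite S" "p \<in> S" "p < l" "\<And>s. s \<in> S \<Longrightarrow> s < l \<Longrightarrow> s \<le> p"
  shows "lb S l = (l + p) / 2"
proof -
  have "Max {s\<in>S. s < l} = p" using assms by (intro Max_eqI) auto
  thus ?thesis using assms unfolding lb_def by auto
qed

lemma lb_none: assumes "\<And>s. s \<in> S \<Longrightarrow> l \<le> s" shows "lb S l = 0"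
  using assms unfolding lb_def by force

lemma rb_eq: assumes "finite S" "q \<in> S" "l < q" "\<And>s. s \<in> S \<Longrightarrow> l < s \<Longrightarrow> q \<le> s"
  shows "rb S l = (l + q) / 2"
proof -
  have "Min {s\<in>S. l < s} = q" using assms by (intro Min_eqI) auto
  thus ?thesis using assms unfolding rb_def by auto
qed

lemma rb_none: assumes "\<And>s. s \<in> S \<Longrightarrow> s \<le> l" shows "rb S l = 1"
  using assms unfolding rb_def by force

lemma lb_cases: assumes "finite S"
  shows "(\<exists>p\<in>S. p < l \<and> (\<forall>s\<in>S. s < l \<longrightarrow> s \<le> p) \<and> lb S l = (l + p) / 2)
         \<or> ((\<forall>s\<in>S. l \<le> s) \<and> lb S l = 0)"
proof (cases "\<exists>s\<in>S. s < l")
  case True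
  let ?p = "Max {s\<in>S. s < l}"
  have f: "finite {s\<in>S. s < l}" using assms by auto
  have ne: "{s\<in>S. s < l} \<noteq> {}" using True by auto
  have "?p \<in> {s\<in>S. s < l}" using Max_in[OF f ne] .
  moreover have "\<forall>s\<in>S. s < l \<longrightarrow> s \<le> ?p" using Max_ge[OF f] by auto
  ultimately show ?thesis using True unfolding lb_def by auto
next
  case False thus ?thesis unfolding lb_def by auto
qed

lemma rb_cases: assumes "finite S"
  shows "(\<exists>q\<in>S. l < q \<and> (\<forall>s\<in>S. l < s \<longrightarrow> q \<le> s) \<and> rb S l = (l + q) / 2)
         \<or> ((\<forall>s\<in>S. s \<le> l) \<and> rb S l = 1)"
proof (cases "\<exists>s\<in>S. l < s")
  case True
  let ?p = "Min {s\<in>S. l < s}"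
  have f: "finite {s\<in>S. l < s}" using assms by auto
  have ne: "{s\<in>S. l < s} \<noteq> {}" using True by auto
  have "?p \<in> {s\<in>S. l < s}" using Min_in[OF f ne] .
  moreover have "\<forall>s\<in>S. l < s \<longrightarrow> ?p \<le> s" using Min_le[OF f] by auto
  ultimately show ?thesis using True unfolding rb_def by auto
next
  case False thus ?thesis unfolding rb_def by auto
qed

lemma lb_ge: assumes "finite S" "s \<in> S" "s < l" shows "(l + s) / 2 \<le> lb S l"
  using lb_cases[OF assms(1), of l] assms by auto

lemma rb_le: assumes "finite S" "s \<in> S" "l < s" shows "rb S l \<le> (l + s) / 2"
  using rb_cases[OF assms(1), of l] assms by auto

lemma lb_bounds: assumes "finite S" "S \<subseteq> {0..1}" "l \<in> {0..1}"
  shows "0 \<le> lb S l" "lb S l \<le> l"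
  using lb_cases[OF assms(1), of l] assms by auto

lemma rb_bounds: assumes "finite S" "S \<subseteq> {0..1}" "l \<in> {0..1}"
  shows "rb S l \<le> 1" "l \<le> rb S l"
  using rb_cases[OF assms(1), of l] assms by auto

lemma cell_pos: assumes "finite S" "S \<subseteq> {0..1}" "l \<in> {0..1}"
  shows "lb S l < rb S l"
  using lb_cases[OF assms(1), of l] rb_cases[OF assms(1), of l] assms by auto

lemma cell_closed: assumes "finite S" "l \<in> S" "s \<in> S" "lb S l \<le> y" "y \<le> rb S l"
  shows "\<bar>l - y\<bar> \<le> \<bar>s - y\<bar>"
proof -
  consider "s < l" | "s = l" | "l < s" by linarith
  thus ?thesis
  proof cases
    case 1 with lb_ge[OF assms(1,3) 1] assms show ?thesis by (auto simp: abs_real_def)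
  next
    case 3 with rb_le[OF assms(1,3) 3] assms show ?thesis by (auto simp: abs_real_def)
  qed simp
qed

lemma cell_open: assumes "finite S" "l \<in> S" "s \<in> S" "s \<noteq> l" "lb S l < y" "y < rb S l"
  shows "\<bar>l - y\<bar> < \<bar>s - y\<bar>"
proof -
  consider "s < l" | "l < s" using assms by linarith
  thus ?thesis
  proof cases
    case 1 with lb_ge[OF assms(1,3) 1] assms show ?thesis by (auto simp: abs_real_def)
  next
    case 2 with rb_le[OF assms(1,3) 2] assms show ?thesis by (auto simp: abs_real_def)
  qed
qed

lemma cell_out: assumes "finite S" "l \<in> S" "y \<in> {0..1}" "y < lb S l \<or> rb S l < y"
  shows "\<exists>s\<in>S. \<bar>s - y\<bar> < \<bar>l - y\<bar>"
  using assms lb_cases[OF assms(1), of l] rb_cases[OF assms(1), of l]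
  by (auto simp: abs_real_def) (smt (verit))+



lemma dmin_le: assumes "i < n" shows "dmin n x y \<le> \<bar>x i - y\<bar>"
  unfolding dmin_def using assms by (intro Min_le) auto

lemma dmin_eqI: assumes "l \<in> x ` {..<n}" "\<And>s. s \<in> x ` {..<n} \<Longrightarrow> \<bar>l - y\<bar> \<le> \<bar>s - y\<bar>"
  shows "dmin n x y = \<bar>l - y\<bar>"
  unfolding dmin_def using assms by (intro Min_eqI) auto

lemma share_in:
  assumes "i < n" "lb (x ` {..<n}) (x i) < y" "y < rb (x ` {..<n}) (x i)"
  shows "share n x i y = 1 / real (card {j \<in> {..<n}. x j = x i})"
proof -
  let ?S = "x ` {..<n}"
  have fin: "finite ?S" by auto
  have li: "x i \<in> ?S" using assms by auto
  have d: "dmin n x y = \<bar>x i - y\<bar>"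
    using cell_closed[OF fin li] assms by (intro dmin_eqI[OF li]) auto
  have "closest n x y = {x i}"
  proof
    show "closest n x y \<subseteq> {x i}"
    proof
      fix l assume "l \<in> closest n x y"
      hence l: "l \<in> ?S" "\<bar>l - y\<bar> = \<bar>x i - y\<bar>" unfolding closest_def d by auto
      show "l \<in> {x i}" using cell_open[OF fin li l(1)] assms l(2) by force
    qed
    show "{x i} \<subseteq> closest n x y" unfolding closest_def d using li by auto
  qed
  thus ?thesis unfolding share_def by simp
qed

lemma share_out:
  assumes "i < n" "y \<in> {0..1}" "y < lb (x ` {..<n}) (x i) \<or> rb (x ` {..<n}) (x i) < y"
  shows "share n x i y = 0"
proof -
  let ?S = "x ` {..<n}"
  have fin: "finite ?S" by auto
  have li: "x i \<in> ?S" using assms by auto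
  obtain s where s: "s \<in> ?S" "\<bar>s - y\<bar> < \<bar>x i - y\<bar>" using cell_out[OF fin li assms(2,3)] by auto
  then obtain j where "j < n" "s = x j" by auto
  hence "dmin n x y < \<bar>x i - y\<bar>" using dmin_le[of j n x y] s by auto
  hence "x i \<notin> closest n x y" unfolding closest_def by auto
  thus ?thesis unfolding share_def by simp
qed

definition mult :: "nat \<Rightarrow> (nat \<Rightarrow> real) \<Rightarrow> real \<Rightarrow> nat" where
  "mult n x l = card {j \<in> {..<n}. x j = l}"

definition cw :: "real set \<Rightarrow> real \<Rightarrow> real" where
  "cw S l = rb S l - lb S l"

lemma payoff_hi:
  assumes vals: "\<And>j. j < n \<Longrightarrow> x j \<in> {0..1}" and i: "i < n"
  shows "(share n x i has_integral (cw (x ` {..<n}) (x i) / real (mult n x (x i)))) {0..1}"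
proof -
  let ?S = "x ` {..<n}"
  let ?a = "lb ?S (x i)" and ?b = "rb ?S (x i)"
  let ?c = "1 / real (mult n x (x i))"
  have fin: "finite ?S" and sub: "?S \<subseteq> {0..1}" using vals by auto
  have xi: "x i \<in> {0..1}" using vals i by auto
  have ab: "0 \<le> ?a" "?a \<le> ?b" "?b \<le> 1"
    using lb_bounds[OF fin sub xi] rb_bounds[OF fin sub xi] by auto
  have "((\<lambda>y. ?c) has_integral (?b - ?a) * ?c) {?a..?b}"
    using has_integral_const_real[of ?c ?a ?b] ab by (simp add: content_real)
  hence "((\<lambda>y. if y \<in> cbox ?a ?b then ?c else 0) has_integral (?b - ?a) * ?c) (cbox 0 1)"
    using ab by (intro has_integral_restrict_closed_subinterval) auto
  hence h: "((\<lambda>y. if y \<in> {?a..?b} then ?c else 0) has_integral (?b - ?a) * ?c) {0..1}" by simp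
  show ?thesis
    unfolding cw_def
  proof (rule has_integral_spike_finite[of "{?a, ?b}", OF _ _ h[simplified]])
    fix y assume y: "y \<in> {0..1} - {?a, ?b}"
    show "share n x i y = (if ?a \<le> y \<and> y \<le> ?b then ?c else 0)"
    proof (cases "?a < y \<and> y < ?b")
      case True thus ?thesis using share_in[OF i] unfolding mult_def by auto
    next
      case False thus ?thesis using share_out[OF i, of y] y by auto
    qed
  qed auto
qed

lemma payoff_eq:
  assumes "\<And>j. j < n \<Longrightarrow> x j \<in> {0..1}" "i < n"
  shows "payoff n x i = cw (x ` {..<n}) (x i) / real (mult n x (x i))"
  unfolding payoff_def using payoff_hi[OF assms] by (rule integral_unique)

lemma sl_facts:
  fixes S :: "real set"
  assumes "finite S"
  defines "xs \<equiv> sorted_list_of_set S"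
  shows "length xs = card S" "\<And>j. j < card S \<Longrightarrow> xs ! j \<in> S"
    "\<And>s. s \<in> S \<Longrightarrow> \<exists>j<card S. s = xs ! j"
    "\<And>i j. i < card S \<Longrightarrow> j < card S \<Longrightarrow> xs ! i < xs ! j \<longleftrightarrow> i < j"
proof -
  have st: "sorted_wrt (<) xs" unfolding xs_def by simp
  have set: "set xs = S" unfolding xs_def using assms by simp
  show len: "length xs = card S" unfolding xs_def by simp
  show "\<And>j. j < card S \<Longrightarrow> xs ! j \<in> S" using set len by auto
  show "\<And>s. s \<in> S \<Longrightarrow> \<exists>j<card S. s = xs ! j" using set len by (auto simp: in_set_conv_nth)
  show "\<And>i j. i < card S \<Longrightarrow> j < card S \<Longrightarrow> xs ! i < xs ! j \<longleftrightarrow> i < j"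
  proof -
    fix i j assume "i < card S" "j < card S"
    thus "xs ! i < xs ! j \<longleftrightarrow> i < j"
      using sorted_wrt_nth_less[OF st, of i j] sorted_wrt_nth_less[OF st, of j i] len
      by (metis less_asym' linorder_neqE_nat order_less_irrefl)
  qed
qed

lemma sl_lb0:
  fixes S :: "real set"
  assumes "finite S" "S \<noteq> {}"
  shows "lb S (sorted_list_of_set S ! 0) = 0"
proof -
  have k: "0 < card S" using assms by (simp add: card_gt_0_iff)
  show ?thesis
  proof (rule lb_none)
    fix s assume "s \<in> S"
    then obtain j where "j < card S" "s = sorted_list_of_set S ! j" using sl_facts(3)[OF assms(1)] by blast
    thus "sorted_list_of_set S ! 0 \<le> s" using sl_facts(4)[OF assms(1) k, of j]
      by (cases j) auto
  qed
qed

lemma sl_rb1: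
  fixes S :: "real set"
  assumes "finite S" "S \<noteq> {}"
  shows "rb S (sorted_list_of_set S ! (card S - 1)) = 1"
proof -
  have k: "0 < card S" using assms by (simp add: card_gt_0_iff)
  show ?thesis
  proof (rule rb_none)
    fix s assume "s \<in> S"
    then obtain j where "j < card S" "s = sorted_list_of_set S ! j" using sl_facts(3)[OF assms(1)] by blast
    thus "s \<le> sorted_list_of_set S ! (card S - 1)" using sl_facts(4)[OF assms(1), of j "card S - 1"] k
      by (cases "j = card S - 1") auto
  qed
qed

lemma sl_step:
  fixes S :: "real set"
  assumes "finite S" "Suc j < card S"
  defines "xs \<equiv> sorted_list_of_set S"
  shows "rb S (xs ! j) = (xs ! j + xs ! Suc j) / 2" "lb S (xs ! Suc j) = (xs ! j + xs ! Suc j) / 2"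
proof -
  note F = sl_facts[OF assms(1), folded xs_def]
  have lt: "xs ! j < xs ! Suc j" using F(4)[of j "Suc j"] assms by auto
  show "rb S (xs ! j) = (xs ! j + xs ! Suc j) / 2"
  proof (rule rb_eq[OF assms(1) F(2)[OF assms(2)] lt])
    fix s assume "s \<in> S" "xs ! j < s"
    then obtain i where "i < card S" "s = xs ! i" using F(3) by blast
    thus "xs ! Suc j \<le> s" using F(4)[of j i] F(4)[of i "Suc j"] \<open>xs ! j < s\<close> assms
      by (metis Suc_lessD linorder_not_less not_less_eq order_le_less)
  qed
  show "lb S (xs ! Suc j) = (xs ! j + xs ! Suc j) / 2"
    using lb_eq[OF assms(1) F(2)] lt
  proof -
    have "lb S (xs ! Suc j) = (xs ! Suc j + xs ! j) / 2"
    proof (rule lb_eq[OF assms(1) F(2) lt])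
      show "j < card S" using assms by auto
      fix s assume "s \<in> S" "s < xs ! Suc j"
      then obtain i where "i < card S" "s = xs ! i" using F(3) by blast
      thus "s \<le> xs ! j" using F(4)[of i "Suc j"] F(4)[of j i] \<open>s < xs ! Suc j\<close> assms
        by (metis less_Suc_eq linorder_not_less order_le_less)
    qed
    thus ?thesis by simp
  qed
qed

lemma sum_sl:
  fixes S :: "real set"
  assumes "finite S"
  shows "(\<Sum>l\<in>S. f l) = (\<Sum>j<card S. f (sorted_list_of_set S ! j))"
proof -
  note F = sl_facts[OF assms]
  have inj: "inj_on (\<lambda>j. sorted_list_of_set S ! j) {..<card S}"
    by (rule inj_onI) (metis F(4) lessThan_iff linorder_neqE_nat order_less_irrefl)
  have im: "(\<lambda>j. sorted_list_of_set S ! j) ` {..<card S} = S" using F(2,3) by fastforce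
  show ?thesis using sum.reindex[OF inj, of f] im by simp
qed

lemma cw_sum:
  fixes S :: "real set"
  assumes "finite S" "S \<noteq> {}"
  shows "(\<Sum>l\<in>S. cw S l) = 1"
proof -
  define xs where "xs = sorted_list_of_set S"
  define k where "k = card S"
  define F where "F j = (if j < k then lb S (xs ! j) else 1)" for j
  have k: "0 < k" using assms unfolding k_def by (simp add: card_gt_0_iff)
  have "\<And>j. j < k \<Longrightarrow> cw S (xs ! j) = F (Suc j) - F j"
  proof -
    fix j assume j: "j < k"
    show "cw S (xs ! j) = F (Suc j) - F j"
    proof (cases "Suc j < k")
      case True thus ?thesis using sl_step[OF assms(1), of j] j unfolding cw_def F_def xs_def k_def by simp
    next
      case False hence "j = k - 1" using j by auto
      thus ?thesis using sl_rb1[OF assms] j k unfolding cw_def F_def xs_def k_def by simp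
    qed
  qed
  hence "(\<Sum>j<k. cw S (xs ! j)) = (\<Sum>j<k. F (Suc j) - F j)" by simp
  also have "\<dots> = F k - F 0" by (rule sum_lessThan_telescope)
  also have "\<dots> = 1" using sl_lb0[OF assms] k unfolding F_def xs_def by simp
  finally show ?thesis using sum_sl[OF assms(1), of "cw S"] unfolding xs_def k_def by simp
qed



lemma abs_int:
  fixes a b l :: real
  assumes "a \<le> l" "l \<le> b"
  shows "((\<lambda>y. \<bar>l - y\<bar>) has_integral ((l - a)^2 + (b - l)^2) / 2) {a..b}"
proof -
  have h1: "((\<lambda>y. l - y) has_integral ((\<lambda>y. l * y - y^2 / 2) l - (\<lambda>y. l * y - y^2 / 2) a)) {a..l}"
    using assms(1)
    by (intro fundamental_theorem_of_calculus)
       (auto intro!: derivative_eq_intros simp: has_real_derivative_iff_has_vector_derivative[symmetric] algebra_simps power2_eq_square)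
  have h2: "((\<lambda>y. y - l) has_integral ((\<lambda>y. y^2 / 2 - l * y) b - (\<lambda>y. y^2 / 2 - l * y) l)) {l..b}"
    using assms(2)
    by (intro fundamental_theorem_of_calculus)
       (auto intro!: derivative_eq_intros simp: has_real_derivative_iff_has_vector_derivative[symmetric] algebra_simps power2_eq_square)
  have e1: "(\<lambda>y. l * y - y^2 / 2) l - (\<lambda>y. l * y - y^2 / 2) a = (l - a)^2 / 2"
    by (simp add: power2_eq_square algebra_simps)
  have e2: "(\<lambda>y. y^2 / 2 - l * y) b - (\<lambda>y. y^2 / 2 - l * y) l = (b - l)^2 / 2"
    by (simp add: power2_eq_square algebra_simps)
  note h1 = h1[unfolded e1] and h2 = h2[unfolded e2]
  have h1': "((\<lambda>y. \<bar>l - y\<bar>) has_integral (l - a)^2 / 2) {a..l}"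
    by (rule has_integral_eq[OF _ h1]) auto
  have h2': "((\<lambda>y. \<bar>l - y\<bar>) has_integral (b - l)^2 / 2) {l..b}"
    by (rule has_integral_eq[OF _ h2]) auto
  show ?thesis using has_integral_combine[OF assms h1' h2'] by (simp add: add_divide_distrib)
qed

definition cc :: "real set \<Rightarrow> real \<Rightarrow> real" where
  "cc S l = ((l - lb S l)^2 + (rb S l - l)^2) / 2"

lemma cost_cell:
  assumes vals: "\<And>j. j < n \<Longrightarrow> x j \<in> {0..1}" and l: "l \<in> x ` {..<n}"
  shows "(dmin n x has_integral cc (x ` {..<n}) l) {lb (x ` {..<n}) l..rb (x ` {..<n}) l}"
proof -
  let ?S = "x ` {..<n}"
  have fin: "finite ?S" and sub: "?S \<subseteq> {0..1}" using vals by auto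
  have l01: "l \<in> {0..1}" using l sub by auto
  have ab: "lb ?S l \<le> l" "l \<le> rb ?S l" using lb_bounds[OF fin sub l01] rb_bounds[OF fin sub l01] by auto
  show ?thesis unfolding cc_def
  proof (rule has_integral_eq[OF _ abs_int[OF ab]])
    fix y assume "y \<in> {lb ?S l..rb ?S l}"
    thus "\<bar>l - y\<bar> = dmin n x y" using cell_closed[OF fin l] by (intro dmin_eqI[symmetric] l) auto
  qed
qed

lemma cost_hi:
  assumes vals: "\<And>j. j < n \<Longrightarrow> x j \<in> {0..1}" and n: "0 < n"
  shows "(dmin n x has_integral (\<Sum>l\<in>x ` {..<n}. cc (x ` {..<n}) l)) {0..1}"
proof -
  define S where "S = x ` {..<n}"
  have fin: "finite S" and sub: "S \<subseteq> {0..1}" and ne: "S \<noteq> {}" using vals n unfolding S_def by auto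
  define xs where "xs = sorted_list_of_set S"
  define k where "k = card S"
  define F where "F j = (if j < k then lb S (xs ! j) else 1)" for j
  note SF = sl_facts[OF fin, folded xs_def k_def]
  have k: "0 < k" using fin ne unfolding k_def by (simp add: card_gt_0_iff)
  have F0: "F 0 = 0" using sl_lb0[OF fin ne] k unfolding F_def xs_def by simp
  have FS: "F (Suc j) = rb S (xs ! j)" if "j < k" for j
  proof (cases "Suc j < k")
    case True thus ?thesis using sl_step[OF fin, of j] that unfolding F_def xs_def k_def by simp
  next
    case False hence "j = k - 1" using that by auto
    thus ?thesis using sl_rb1[OF fin ne] that k unfolding F_def xs_def k_def by simp
  qed
  have Fj: "F j = lb S (xs ! j)" if "j < k" for j using that unfolding F_def by simp
  have "j \<le> k \<Longrightarrow> (dmin n x has_integral (\<Sum>i<j. cc S (xs ! i))) {0..F j}" for j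
  proof (induction j)
    case 0 thus ?case using F0 by (simp add: has_integral_refl)
  next
    case (Suc j)
    hence j: "j < k" by auto
    have mem: "xs ! j \<in> S" using SF(2) j unfolding k_def by auto
    hence m01: "xs ! j \<in> {0..1}" using sub by auto
    have c: "(dmin n x has_integral cc S (xs ! j)) {F j..F (Suc j)}"
      using cost_cell[OF vals, where l="xs ! j"] mem Fj[OF j] FS[OF j] unfolding S_def by auto
    have "0 \<le> F j" "F j \<le> F (Suc j)"
      using Fj[OF j] FS[OF j] lb_bounds[OF fin sub m01] rb_bounds[OF fin sub m01] by auto
    from has_integral_combine[OF this Suc.IH[OF Suc_leD[OF Suc.prems]] c]
    show ?case by simp
  qed
  from this[of k] have "(dmin n x has_integral (\<Sum>i<k. cc S (xs ! i))) {0..1}"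
    unfolding F_def by simp
  thus ?thesis using sum_sl[OF fin, of "cc S"] unfolding S_def xs_def k_def by simp
qed

lemma cost_eq:
  assumes "\<And>j. j < n \<Longrightarrow> x j \<in> {0..1}" "0 < n"
  shows "social_cost n x = (\<Sum>l\<in>x ` {..<n}. cc (x ` {..<n}) l)"
  unfolding social_cost_def using cost_hi[OF assms] by (rule integral_unique)

lemma fiber_sum:
  fixes x :: "nat \<Rightarrow> real"
  shows "(\<Sum>i<n. g (x i) / real (mult n x (x i))) = (\<Sum>l\<in>x ` {..<n}. g l)"
proof -
  have "(\<Sum>i<n. g (x i) / real (mult n x (x i))) =
     (\<Sum>l\<in>x ` {..<n}. \<Sum>i\<in>{i. i \<in> {..<n} \<and> x i = l}. g (x i) / real (mult n x (x i)))"
    by (rule sum.image_gen) simp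
  also have "\<dots> = (\<Sum>l\<in>x ` {..<n}. g l)"
  proof (rule sum.cong[OF refl])
    fix l assume l: "l \<in> x ` {..<n}"
    have "(\<Sum>i\<in>{i. i \<in> {..<n} \<and> x i = l}. g (x i) / real (mult n x (x i)))
        = (\<Sum>i\<in>{i. i \<in> {..<n} \<and> x i = l}. g l / real (mult n x l))" by (rule sum.cong) auto
    also have "\<dots> = real (card {i. i \<in> {..<n} \<and> x i = l}) * (g l / real (mult n x l))" by simp
    also have "\<dots> = g l"
    proof -
      obtain i0 where "i0 < n" "x i0 = l" using l by auto
      hence "card {i. i \<in> {..<n} \<and> x i = l} > 0" by (auto simp: card_gt_0_iff)
      hence "real (card {i. i \<in> {..<n} \<and> x i = l}) \<noteq> 0" by linarith
      moreover have "mult n x l = card {i. i \<in> {..<n} \<and> x i = l}" unfolding mult_def by simp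
      ultimately show ?thesis by simp
    qed
    finally show "(\<Sum>i\<in>{i. i \<in> {..<n} \<and> x i = l}. g (x i) / real (mult n x (x i))) = g l" .
  qed
  finally show ?thesis .
qed

lemma mult_sum:
  fixes x :: "nat \<Rightarrow> real"
  shows "(\<Sum>l\<in>x ` {..<n}. mult n x l) = n"
proof -
  have "n = (\<Sum>i<n. (1::nat))" by simp
  also have "\<dots> = (\<Sum>l\<in>x ` {..<n}. \<Sum>i\<in>{i. i \<in> {..<n} \<and> x i = l}. 1)"
    by (rule sum.image_gen) simp
  also have "\<dots> = (\<Sum>l\<in>x ` {..<n}. mult n x l)" unfolding mult_def by simp
  finally show ?thesis by simp
qed

lemma mult_pos: "l \<in> x ` {..<n} \<Longrightarrow> 0 < mult n x l"
  unfolding mult_def by (auto simp: card_gt_0_iff)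

lemma payoff_sum:
  assumes "\<And>j. j < n \<Longrightarrow> x j \<in> {0..1}" "0 < n"
  shows "(\<Sum>i<n. payoff n x i) = 1"
proof -
  have "(\<Sum>i<n. payoff n x i) = (\<Sum>i<n. cw (x ` {..<n}) (x i) / real (mult n x (x i)))"
    using payoff_eq[OF assms(1)] by simp
  also have "\<dots> = (\<Sum>l\<in>x ` {..<n}. cw (x ` {..<n}) l)" by (rule fiber_sum)
  also have "\<dots> = 1" using assms by (intro cw_sum) auto
  finally show ?thesis .
qed

text \<open>tangent trick lower bound\<close>
lemma cost_lower:
  assumes vals: "\<And>j. j < n \<Longrightarrow> x j \<in> {0..1}" and n: "0 < n"
  shows "social_cost n x \<ge> 1 / (4 * real (card (x ` {..<n})))"
proof -
  define S where "S = x ` {..<n}"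
  define k where "k = card S"
  define c where "c = 1 / (2 * real k)"
  have fin: "finite S" and ne: "S \<noteq> {}" using n unfolding S_def by auto
  have k: "0 < k" using fin ne unfolding k_def by (simp add: card_gt_0_iff)
  have pt: "cc S l \<ge> c * cw S l - c^2" for l
  proof -
    have "0 \<le> (l - lb S l - c)^2 + (rb S l - l - c)^2" by simp
    thus ?thesis unfolding cc_def cw_def by (simp add: power2_eq_square algebra_simps)
  qed
  have "social_cost n x = (\<Sum>l\<in>S. cc S l)" using cost_eq[OF vals n] unfolding S_def by simp
  also have "\<dots> \<ge> (\<Sum>l\<in>S. c * cw S l - c^2)" by (rule sum_mono) (rule pt)
  finally have "social_cost n x \<ge> c * (\<Sum>l\<in>S. cw S l) - real k * c^2"
    by (simp add: sum_subtractf sum_distrib_left k_def)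
  also have "(\<Sum>l\<in>S. cw S l) = 1" using cw_sum[OF fin ne] .
  finally have "social_cost n x \<ge> c - real k * c^2" by simp
  moreover have "c - real k * c^2 = 1 / (4 * real k)" unfolding c_def using k
    by (simp add: field_simps power2_eq_square)
  ultimately show ?thesis unfolding k_def S_def by simp
qed



lemma upd_image:
  fixes x :: "nat \<Rightarrow> real" and n i :: nat
  assumes "i < n"
  shows "(x(i := z)) ` {..<n} = insert z (x ` ({..<n} - {i}))"
  using assms by (auto simp: image_iff)

lemma upd_vals:
  fixes x :: "nat \<Rightarrow> real" and n i :: nat
  assumes "\<And>j. j < n \<Longrightarrow> x j \<in> {0..1}" "z \<in> {0..1}"
  shows "\<And>j. j < n \<Longrightarrow> (x(i := z)) j \<in> {0..1}"
  using assms by auto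

lemma mult_upd_new:
  fixes x :: "nat \<Rightarrow> real" and n i :: nat
  assumes "i < n" "z \<notin> x ` ({..<n} - {i})"
  shows "mult n (x(i := z)) z = 1"
proof -
  have "{j \<in> {..<n}. (x(i := z)) j = z} = {i}"
  proof (intro equalityI subsetI)
    fix j assume j: "j \<in> {j \<in> {..<n}. (x(i := z)) j = z}"
    show "j \<in> {i}"
    proof (rule ccontr)
      assume "j \<notin> {i}"
      hence "j \<in> {..<n} - {i}" "x j = z" using j by auto
      hence "z \<in> x ` ({..<n} - {i})" by (metis imageI)
      thus False using assms by simp
    qed
  next
    fix j assume "j \<in> {i}" thus "j \<in> {j \<in> {..<n}. (x(i := z)) j = z}" using assms by simp
  qed
  thus ?thesis unfolding mult_def by simp
qed

lemma mult_upd_old: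
  fixes x :: "nat \<Rightarrow> real" and n i :: nat
  assumes "i < n" "z \<in> x ` ({..<n} - {i})"
  shows "2 \<le> mult n (x(i := z)) z"
proof -
  obtain j where j: "j \<in> {..<n} - {i}" "z = x j" using assms(2) by (rule imageE)
  have "{i, j} \<subseteq> {j \<in> {..<n}. (x(i := z)) j = z}" using j assms by auto
  from card_mono[OF _ this] have "card {i, j} \<le> mult n (x(i := z)) z" unfolding mult_def by simp
  thus ?thesis using j by simp
qed

lemma Q_single:
  fixes x :: "nat \<Rightarrow> real" and n i :: nat
  assumes "i < n" "mult n x (x i) = 1"
  shows "x ` ({..<n} - {i}) = x ` {..<n} - {x i}"
proof -
  have A: "i \<in> {j \<in> {..<n}. x j = x i}" using assms by simp
  have "card {j \<in> {..<n}. x j = x i} = 1" using assms unfolding mult_def by simp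
  then obtain a where a: "{j \<in> {..<n}. x j = x i} = {a}" by (rule card_1_singletonE)
  have ai: "a = i" using A unfolding a by simp
  have B: "\<And>j. j < n \<Longrightarrow> x j = x i \<Longrightarrow> j = i"
  proof -
    fix j assume "j < n" "x j = x i"
    hence "j \<in> {j \<in> {..<n}. x j = x i}" by simp
    hence "j \<in> {a}" unfolding a .
    thus "j = i" using ai by simp
  qed
  show ?thesis
  proof (intro equalityI subsetI)
    fix l assume "l \<in> x ` ({..<n} - {i})"
    then obtain j where "j \<in> {..<n} - {i}" "l = x j" by (rule imageE)
    thus "l \<in> x ` {..<n} - {x i}" using B by auto
  next
    fix l assume "l \<in> x ` {..<n} - {x i}"
    then obtain j where "j < n" "l = x j" "l \<noteq> x i" by auto
    hence "j \<in> {..<n} - {i}" by auto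
    thus "l \<in> x ` ({..<n} - {i})" using \<open>l = x j\<close> by simp
  qed
qed

lemma Q_multi:
  fixes x :: "nat \<Rightarrow> real" and n i :: nat
  assumes "i < n" "mult n x (x i) \<noteq> 1"
  shows "x ` ({..<n} - {i}) = x ` {..<n}"
proof -
  have A: "i \<in> {j \<in> {..<n}. x j = x i}" using assms by simp
  have ne: "{j \<in> {..<n}. x j = x i} \<noteq> {i}"
  proof
    assume "{j \<in> {..<n}. x j = x i} = {i}"
    hence "mult n x (x i) = 1" unfolding mult_def by simp
    thus False using assms by simp
  qed
  have "\<exists>j. j \<in> {j \<in> {..<n}. x j = x i} \<and> j \<noteq> i"
  proof (rule ccontr)
    assume "\<not> ?thesis"
    hence "{j \<in> {..<n}. x j = x i} \<subseteq> {i}" by auto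
    hence "{j \<in> {..<n}. x j = x i} = {i}" using A by auto
    thus False using ne by simp
  qed
  then obtain j where j: "j \<in> {j \<in> {..<n}. x j = x i}" "j \<noteq> i" by blast
  show ?thesis
  proof (intro equalityI subsetI)
    fix l assume "l \<in> x ` ({..<n} - {i})" thus "l \<in> x ` {..<n}" by auto
  next
    fix l assume "l \<in> x ` {..<n}"
    then obtain k where k: "k < n" "l = x k" by auto
    show "l \<in> x ` ({..<n} - {i})"
    proof (cases "k = i")
      case True
      hence "l = x j" "j \<in> {..<n} - {i}" using j k by auto
      thus ?thesis by simp
    next
      case False thus ?thesis using k by simp
    qed
  qed
qed

lemma cw_nonneg:
  fixes x :: "nat \<Rightarrow> real" and n i :: nat
  assumes "\<And>j. j < n \<Longrightarrow> x j \<in> {0..1}" "i < n"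
  shows "0 \<le> cw (x ` {..<n}) (x i)"
proof -
  have "finite (x ` {..<n})" "x ` {..<n} \<subseteq> {0..1}" "x i \<in> {0..1}" using assms by auto
  from cell_pos[OF this] show ?thesis unfolding cw_def by simp
qed

lemma payoff_nonneg:
  fixes x :: "nat \<Rightarrow> real" and n i :: nat
  assumes "\<And>j. j < n \<Longrightarrow> x j \<in> {0..1}" "i < n"
  shows "0 \<le> payoff n x i"
  using payoff_eq[of n x i, OF assms] cw_nonneg[of n x i, OF assms] by simp

lemma dev_new:
  fixes x :: "nat \<Rightarrow> real" and n i :: nat
  assumes vals: "\<And>j. j < n \<Longrightarrow> x j \<in> {0..1}" and i: "i < n" and z: "z \<in> {0..1}"
    and zn: "z \<notin> x ` ({..<n} - {i})"
  shows "payoff n (x(i := z)) i = cw (insert z (x ` ({..<n} - {i}))) z"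
  using payoff_eq[of n "x(i := z)" i, OF upd_vals[where x=x and n=n and z=z and i=i, OF vals z] i] upd_image[OF i] mult_upd_new[OF i zn] i by simp

lemma dev_old:
  fixes x :: "nat \<Rightarrow> real" and n i :: nat
  assumes vals: "\<And>j. j < n \<Longrightarrow> x j \<in> {0..1}" and i: "i < n" and z: "z \<in> {0..1}"
    and zn: "z \<in> x ` ({..<n} - {i})"
  shows "payoff n (x(i := z)) i \<le> cw (x ` ({..<n} - {i})) z / 2"
proof -
  let ?Q = "x ` ({..<n} - {i})"
  have e: "(x(i := z)) ` {..<n} = ?Q" using upd_image[OF i] zn by auto
  have "payoff n (x(i := z)) i = cw ?Q z / real (mult n (x(i := z)) z)"
    using payoff_eq[of n "x(i := z)" i, OF upd_vals[where x=x and n=n and z=z and i=i, OF vals z] i] e i by simp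
  moreover have "0 \<le> cw ?Q z"
  proof -
    have "finite ?Q" "?Q \<subseteq> {0..1}" using vals by auto
    from cell_pos[OF this z] show ?thesis unfolding cw_def by simp
  qed
  moreover have "2 \<le> real (mult n (x(i := z)) z)" using mult_upd_old[OF i zn] by simp
  ultimately show ?thesis
    using divide_left_mono[of 2 "real (mult n (x(i := z)) z)" "cw (x ` ({..<n} - {i})) z"] by simp
qed

lemma dev_bound:
  fixes x :: "nat \<Rightarrow> real" and n i :: nat
  assumes vals: "\<And>j. j < n \<Longrightarrow> x j \<in> {0..1}" and i: "i < n" and z: "z \<in> {0..1}"
    and Qne: "x ` ({..<n} - {i}) \<noteq> {}"
    and gaps: "\<And>p q. p \<in> x ` ({..<n} - {i}) \<Longrightarrow> q \<in> x ` ({..<n} - {i}) \<Longrightarrow> p < q \<Longrightarrow>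
                 (\<forall>r\<in>x ` ({..<n} - {i}). r \<le> p \<or> q \<le> r) \<Longrightarrow> q - p \<le> 2 * B"
    and lo: "\<exists>q\<in>x ` ({..<n} - {i}). q \<le> B"
    and hi: "\<exists>q\<in>x ` ({..<n} - {i}). 1 - B \<le> q"
  shows "payoff n (x(i := z)) i \<le> B"
proof -
  define Q where "Q = x ` ({..<n} - {i})"
  have finQ: "finite Q" and subQ: "Q \<subseteq> {0..1}" unfolding Q_def using vals by auto
  obtain q0 where q0: "q0 \<in> Q" "q0 \<le> B" using lo unfolding Q_def by auto
  obtain q1 where q1: "q1 \<in> Q" "1 - B \<le> q1" using hi unfolding Q_def by auto
  note gaps = gaps[folded Q_def]
  show ?thesis
  proof (cases "z \<in> Q")
    case False
    define T where "T = insert z Q"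
    have finT: "finite T" unfolding T_def using finQ by auto
    have "cw T z \<le> B"
    proof -
      note LC = lb_cases[OF finT, of z] and RC = rb_cases[OF finT, of z]
      show ?thesis
      proof (cases "\<exists>s\<in>T. s < z")
        case True
        then obtain p where p: "p \<in> T" "p < z" "\<forall>s\<in>T. s < z \<longrightarrow> s \<le> p" "lb T z = (z + p) / 2"
          using LC by force
        have pQ: "p \<in> Q" using p unfolding T_def by auto
        show ?thesis
        proof (cases "\<exists>s\<in>T. z < s")
          case True
          then obtain q where q: "q \<in> T" "z < q" "\<forall>s\<in>T. z < s \<longrightarrow> q \<le> s" "rb T z = (z + q) / 2"
            using RC by force
          have qQ: "q \<in> Q" using q unfolding T_def by auto
          have "\<forall>r\<in>Q. r \<le> p \<or> q \<le> r"
          proof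
            fix r assume "r \<in> Q"
            hence "r \<noteq> z" "r \<in> T" using False unfolding T_def by auto
            thus "r \<le> p \<or> q \<le> r" using p(3) q(3) by force
          qed
          from gaps[OF pQ qQ _ this] p q show ?thesis unfolding cw_def by simp
        next
          case False
          hence "rb T z = 1" using RC by auto
          moreover have "q1 \<le> p" using q1 p(3) False \<open>z \<notin> Q\<close> unfolding T_def
            by (metis insertCI linorder_neqE_linordered_idom)
          ultimately show ?thesis using p q1 unfolding cw_def by simp
        qed
      next
        case False
        hence lb0: "lb T z = 0" using LC by auto
        have "q0 \<in> T" unfolding T_def using q0 by auto
        have nq: "\<not> q0 < z" using False \<open>q0 \<in> T\<close> by blast
        have "q0 \<noteq> z" using q0 \<open>z \<notin> Q\<close> by blast
        hence zq0: "z < q0" using nq by linarith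
        then obtain q where q: "q \<in> T" "z < q" "\<forall>s\<in>T. z < s \<longrightarrow> q \<le> s" "rb T z = (z + q) / 2"
          using RC \<open>q0 \<in> T\<close> by force
        have "q \<le> q0" using q(3) \<open>q0 \<in> T\<close> zq0 by auto
        thus ?thesis using lb0 q q0 unfolding cw_def by simp
      qed
    qed
    thus ?thesis using dev_new[OF vals i z] False unfolding T_def Q_def by simp
  next
    case True
    have l: "z - lb Q z \<le> B"
    proof (cases "\<exists>s\<in>Q. s < z")
      case True
      then obtain p where p: "p \<in> Q" "p < z" "\<forall>s\<in>Q. s < z \<longrightarrow> s \<le> p" "lb Q z = (z + p) / 2"
        using lb_cases[OF finQ, of z] by force
      have "\<forall>r\<in>Q. r \<le> p \<or> z \<le> r" using p(3) by force
      from gaps[OF p(1) \<open>z \<in> Q\<close> p(2) this] p show ?thesis by simp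
    next
      case False
      hence "lb Q z = 0" using lb_cases[OF finQ, of z] by auto
      moreover have "z \<le> q0" using False q0 by force
      ultimately show ?thesis using q0 by simp
    qed
    have r: "rb Q z - z \<le> B"
    proof (cases "\<exists>s\<in>Q. z < s")
      case True
      then obtain q where q: "q \<in> Q" "z < q" "\<forall>s\<in>Q. z < s \<longrightarrow> q \<le> s" "rb Q z = (z + q) / 2"
        using rb_cases[OF finQ, of z] by force
      have "\<forall>r\<in>Q. r \<le> z \<or> q \<le> r" using q(3) by force
      from gaps[OF \<open>z \<in> Q\<close> q(1) q(2) this] q show ?thesis by simp
    next
      case False
      hence "rb Q z = 1" using rb_cases[OF finQ, of z] by auto
      moreover have "q1 \<le> z" using False q1 by force
      ultimately show ?thesis using q1 by simp
    qed
    have "payoff n (x(i := z)) i \<le> cw Q z / 2" using dev_old[OF vals i z] True unfolding Q_def by simp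
    also have "\<dots> \<le> B" using l r unfolding cw_def by simp
    finally show ?thesis .
  qed
qed



lemma ne_vals: "is_NE n x \<Longrightarrow> j < n \<Longrightarrow> x j \<in> {0..1}"
  unfolding is_NE_def profiles_def by auto

lemma ne_dev: "is_NE n x \<Longrightarrow> i < n \<Longrightarrow> z \<in> {0..1} \<Longrightarrow> payoff n (x(i := z)) i \<le> payoff n x i"
  unfolding is_NE_def by auto

lemma l_in_Q:
  fixes x :: "nat \<Rightarrow> real" and n i :: nat
  assumes i: "i < n" and l: "l \<in> x ` {..<n}" and nA: "\<not> (l = x i \<and> mult n x (x i) = 1)"
  shows "l \<in> x ` ({..<n} - {i})"
proof (cases "mult n x (x i) = 1")
  case True thus ?thesis using Q_single[OF i True] l nA by auto
next
  case False thus ?thesis using Q_multi[OF i False] l by auto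
qed

lemma ne_hr:
  fixes x :: "nat \<Rightarrow> real" and n i :: nat
  assumes NE: "is_NE n x" and i: "i < n" and l: "l \<in> x ` {..<n}"
  shows "rb (x ` {..<n}) l - l \<le> payoff n x i"
proof -
  define S where "S = x ` {..<n}"
  define Q where "Q = x ` ({..<n} - {i})"
  have vals: "\<And>j. j < n \<Longrightarrow> x j \<in> {0..1}" using ne_vals[OF NE] by auto
  have fin: "finite S" and sub: "S \<subseteq> {0..1}" unfolding S_def using vals by auto
  have QS: "Q \<subseteq> S" unfolding Q_def S_def by auto
  have finQ: "finite Q" using QS fin finite_subset by auto
  have lS: "l \<in> S" using l unfolding S_def .
  have l01: "l \<in> {0..1}" using lS sub by auto
  have pay: "payoff n x i = cw S (x i) / real (mult n x (x i))"
    unfolding S_def using payoff_eq[of n x i, OF vals i] .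
  have pnn: "0 \<le> payoff n x i" using payoff_nonneg[of n x i, OF vals i] .
  show ?thesis
  proof (cases "l = x i \<and> mult n x (x i) = 1")
    case True
    hence "payoff n x i = rb S l - lb S l" using pay unfolding cw_def by simp
    thus ?thesis using lb_bounds[OF fin sub l01] unfolding S_def by simp
  next
    case False
    hence lQ: "l \<in> Q" unfolding Q_def using l_in_Q[OF i l] by simp
    show ?thesis
    proof (cases "\<exists>s\<in>S. l < s")
      case True
      then obtain r where r: "r \<in> S" "l < r" "\<forall>s\<in>S. l < s \<longrightarrow> r \<le> s" "rb S l = (l + r) / 2"
        using rb_cases[OF fin, of l] by force
      show ?thesis
      proof (cases "r = x i \<and> mult n x (x i) = 1")
        case True
        have "lb S r = (r + l) / 2"
        proof (rule lb_eq[OF fin lS r(2)])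
          fix s assume "s \<in> S" "s < r" thus "s \<le> l" using r(3) by force
        qed
        moreover have "r \<le> rb S r" using rb_bounds[OF fin sub] r(1) sub by auto
        moreover have "payoff n x i = rb S r - lb S r" using pay True unfolding cw_def by simp
        ultimately show ?thesis using r(4) unfolding S_def by simp
      next
        case False
        hence rQ: "r \<in> Q" unfolding Q_def using l_in_Q[OF i] r(1) unfolding S_def by simp
        define z where "z = (l + r) / 2"
        have z01: "z \<in> {0..1}" using l01 r(1) sub unfolding z_def by auto
        have lz: "l < z" "z < r" using r(2) unfolding z_def by auto
        have zQ: "z \<notin> Q"
        proof
          assume "z \<in> Q" hence "z \<in> S" using QS by auto
          thus False using r(3) lz by force
        qed
        define T where "T = insert z Q"
        have finT: "finite T" unfolding T_def using finQ by simp
        have lT: "lb T z = (z + l) / 2"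
        proof (rule lb_eq[OF finT _ lz(1)])
          show "l \<in> T" unfolding T_def using lQ by simp
          fix s assume "s \<in> T" "s < z"
          hence "s \<in> S" using QS unfolding T_def by auto
          thus "s \<le> l" using r(3) \<open>s < z\<close> lz by force
        qed
        have rT: "rb T z = (z + r) / 2"
        proof (rule rb_eq[OF finT _ lz(2)])
          show "r \<in> T" unfolding T_def using rQ by simp
          fix s assume "s \<in> T" "z < s"
          hence "s \<in> S" using QS unfolding T_def by auto
          thus "r \<le> s" using r(3) \<open>z < s\<close> lz by force
        qed
        have "payoff n (x(i := z)) i = cw T z"
          using dev_new[OF vals i z01] zQ unfolding T_def Q_def by simp
        also have "\<dots> = rb S l - l" using lT rT r(4) unfolding cw_def z_def by simp
        finally show ?thesis using ne_dev[OF NE i z01] unfolding S_def by simp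
      qed
    next
      case False
      hence rb1: "rb S l = 1" using rb_cases[OF fin, of l] by auto
      show ?thesis
      proof (rule ccontr)
        assume "\<not> ?thesis"
        hence lt: "payoff n x i < 1 - l" using rb1 unfolding S_def by simp
        define d where "d = 1 - l - payoff n x i"
        define z where "z = l + d"
        have d: "0 < d" using lt unfolding d_def by simp
        have z01: "z \<in> {0..1}" using l01 pnn d unfolding z_def d_def by auto
        have lz: "l < z" using d unfolding z_def by simp
        have allS: "\<forall>s\<in>S. s \<le> l" using False by auto
        have zQ: "z \<notin> Q" using QS allS lz by force
        define T where "T = insert z Q"
        have finT: "finite T" unfolding T_def using finQ by simp
        have lT: "lb T z = (z + l) / 2"
        proof (rule lb_eq[OF finT _ lz])
          show "l \<in> T" unfolding T_def using lQ by simp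
          fix s assume "s \<in> T" "s < z"
          hence "s \<in> S" using QS unfolding T_def by auto
          thus "s \<le> l" using allS by auto
        qed
        have rT: "rb T z = 1"
        proof (rule rb_none)
          fix s assume "s \<in> T"
          thus "s \<le> z" using QS allS lz unfolding T_def by force
        qed
        have "payoff n (x(i := z)) i = cw T z"
          using dev_new[OF vals i z01] zQ unfolding T_def Q_def by simp
        also have "\<dots> = 1 - (z + l) / 2" using lT rT unfolding cw_def by simp
        also have "\<dots> = payoff n x i + d / 2" using z_def d_def by (simp add: field_simps)
        finally show False using ne_dev[OF NE i z01] d by simp
      qed
    qed
  qed
qed

lemma ne_hl:
  fixes x :: "nat \<Rightarrow> real" and n i :: nat
  assumes NE: "is_NE n x" and i: "i < n" and l: "l \<in> x ` {..<n}"
  shows "l - lb (x ` {..<n}) l \<le> payoff n x i"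
proof -
  define S where "S = x ` {..<n}"
  define Q where "Q = x ` ({..<n} - {i})"
  have vals: "\<And>j. j < n \<Longrightarrow> x j \<in> {0..1}" using ne_vals[OF NE] by auto
  have fin: "finite S" and sub: "S \<subseteq> {0..1}" unfolding S_def using vals by auto
  have QS: "Q \<subseteq> S" unfolding Q_def S_def by auto
  have finQ: "finite Q" using QS fin finite_subset by auto
  have lS: "l \<in> S" using l unfolding S_def .
  have l01: "l \<in> {0..1}" using lS sub by auto
  have pay: "payoff n x i = cw S (x i) / real (mult n x (x i))"
    unfolding S_def using payoff_eq[of n x i, OF vals i] .
  have pnn: "0 \<le> payoff n x i" using payoff_nonneg[of n x i, OF vals i] .
  show ?thesis
  proof (cases "l = x i \<and> mult n x (x i) = 1")
    case True
    hence "payoff n x i = rb S l - lb S l" using pay unfolding cw_def by simp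
    thus ?thesis using rb_bounds[OF fin sub l01] unfolding S_def by simp
  next
    case False
    hence lQ: "l \<in> Q" unfolding Q_def using l_in_Q[OF i l] by simp
    show ?thesis
    proof (cases "\<exists>s\<in>S. s < l")
      case True
      then obtain r where r: "r \<in> S" "r < l" "\<forall>s\<in>S. s < l \<longrightarrow> s \<le> r" "lb S l = (l + r) / 2"
        using lb_cases[OF fin, of l] by force
      show ?thesis
      proof (cases "r = x i \<and> mult n x (x i) = 1")
        case True
        have "rb S r = (r + l) / 2"
        proof (rule rb_eq[OF fin lS r(2)])
          fix s assume "s \<in> S" "r < s" thus "l \<le> s" using r(3) by force
        qed
        moreover have "lb S r \<le> r" using lb_bounds[OF fin sub] r(1) sub by auto
        moreover have "payoff n x i = rb S r - lb S r" using pay True unfolding cw_def by simp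
        ultimately show ?thesis using r(4) unfolding S_def by simp
      next
        case False
        hence rQ: "r \<in> Q" unfolding Q_def using l_in_Q[OF i] r(1) unfolding S_def by simp
        define z where "z = (l + r) / 2"
        have z01: "z \<in> {0..1}" using l01 r(1) sub unfolding z_def by auto
        have lz: "r < z" "z < l" using r(2) unfolding z_def by auto
        have zQ: "z \<notin> Q"
        proof
          assume "z \<in> Q" hence "z \<in> S" using QS by auto
          thus False using r(3) lz by force
        qed
        define T where "T = insert z Q"
        have finT: "finite T" unfolding T_def using finQ by simp
        have lT: "lb T z = (z + r) / 2"
        proof (rule lb_eq[OF finT _ lz(1)])
          show "r \<in> T" unfolding T_def using rQ by simp
          fix s assume "s \<in> T" "s < z"
          hence "s \<in> S" using QS unfolding T_def by auto
          thus "s \<le> r" using r(3) \<open>s < z\<close> lz by force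
        qed
        have rT: "rb T z = (z + l) / 2"
        proof (rule rb_eq[OF finT _ lz(2)])
          show "l \<in> T" unfolding T_def using lQ by simp
          fix s assume "s \<in> T" "z < s"
          hence "s \<in> S" using QS unfolding T_def by auto
          thus "l \<le> s" using r(3) \<open>z < s\<close> lz by force
        qed
        have "payoff n (x(i := z)) i = cw T z"
          using dev_new[OF vals i z01] zQ unfolding T_def Q_def by simp
        also have "\<dots> = l - lb S l" using lT rT r(4) unfolding cw_def z_def by simp
        finally show ?thesis using ne_dev[OF NE i z01] unfolding S_def by simp
      qed
    next
      case False
      hence lb0: "lb S l = 0" using lb_cases[OF fin, of l] by auto
      show ?thesis
      proof (rule ccontr)
        assume "\<not> ?thesis"
        hence lt: "payoff n x i < l" using lb0 unfolding S_def by simp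
        define d where "d = l - payoff n x i"
        define z where "z = l - d"
        have d: "0 < d" using lt unfolding d_def by simp
        have z01: "z \<in> {0..1}" using l01 pnn d unfolding z_def d_def by auto
        have lz: "z < l" using d unfolding z_def by simp
        have allS: "\<forall>s\<in>S. l \<le> s" using False by auto
        have zQ: "z \<notin> Q" using QS allS lz by force
        define T where "T = insert z Q"
        have finT: "finite T" unfolding T_def using finQ by simp
        have rT: "rb T z = (z + l) / 2"
        proof (rule rb_eq[OF finT _ lz])
          show "l \<in> T" unfolding T_def using lQ by simp
          fix s assume "s \<in> T" "z < s"
          hence "s \<in> S" using QS unfolding T_def by auto
          thus "l \<le> s" using allS by auto
        qed
        have lT: "lb T z = 0"
        proof (rule lb_none)
          fix s assume "s \<in> T"
          thus "z \<le> s" using QS allS lz unfolding T_def by force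
        qed
        have "payoff n (x(i := z)) i = cw T z"
          using dev_new[OF vals i z01] zQ unfolding T_def Q_def by simp
        also have "\<dots> = (z + l) / 2" using lT rT unfolding cw_def by simp
        also have "\<dots> = payoff n x i + d / 2" using z_def d_def by (simp add: field_simps)
        finally show False using ne_dev[OF NE i z01] d by simp
      qed
    qed
  qed
qed



definition Hm :: "real set \<Rightarrow> real" where
  "Hm S = Max ((\<lambda>l. max (l - lb S l) (rb S l - l)) ` S)"

lemma H_ge: assumes "finite S" "l \<in> S" shows "l - lb S l \<le> Hm S" "rb S l - l \<le> Hm S"
proof -
  have "max (l - lb S l) (rb S l - l) \<le> Hm S" unfolding Hm_def using assms by (intro Max_ge) auto
  thus "l - lb S l \<le> Hm S" "rb S l - l \<le> Hm S" by auto
qed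

lemma ne_H:
  fixes x :: "nat \<Rightarrow> real" and n i :: nat
  assumes NE: "is_NE n x" and i: "i < n"
  shows "Hm (x ` {..<n}) \<le> payoff n x i"
  unfolding Hm_def
proof (subst Max_le_iff)
  show "finite ((\<lambda>l. max (l - lb (x ` {..<n}) l) (rb (x ` {..<n}) l - l)) ` x ` {..<n})" by simp
  show "(\<lambda>l. max (l - lb (x ` {..<n}) l) (rb (x ` {..<n}) l - l)) ` x ` {..<n} \<noteq> {}" using i by auto
  show "\<forall>a\<in>(\<lambda>l. max (l - lb (x ` {..<n}) l) (rb (x ` {..<n}) l - l)) ` x ` {..<n}. a \<le> payoff n x i"
    using ne_hl[OF NE i] ne_hr[OF NE i] by auto
qed

lemma ne_mult:
  fixes x :: "nat \<Rightarrow> real" and n i :: nat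
  assumes NE: "is_NE n x" and i: "i < n"
  defines "S \<equiv> x ` {..<n}"
  shows "mult n x (x i) = 1 \<or> mult n x (x i) = 2"
    "mult n x (x i) = 2 \<Longrightarrow> x i - lb S (x i) = Hm S \<and> rb S (x i) - x i = Hm S"
    "mult n x (x i) = 1 \<Longrightarrow> Hm S \<le> cw S (x i)"
proof -
  have vals: "\<And>j. j < n \<Longrightarrow> x j \<in> {0..1}" using ne_vals[OF NE] by auto
  have fin: "finite S" and sub: "S \<subseteq> {0..1}" unfolding S_def using vals by auto
  have xi: "x i \<in> S" "x i \<in> {0..1}" using i vals unfolding S_def by auto
  define c where "c = cw S (x i)"
  define m where "m = mult n x (x i)"
  have cpos: "0 < c" using cell_pos[OF fin sub xi(2)] unfolding c_def cw_def by simp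
  have m1: "1 \<le> m" using mult_pos[of "x i" x n] i unfolding m_def by auto
  have pay: "payoff n x i = c / real m" using payoff_eq[of n x i, OF vals i] unfolding c_def m_def S_def by simp
  have hl: "x i - lb S (x i) \<le> c / real m" using ne_hl[OF NE i, of "x i"] i pay unfolding S_def by auto
  have hr: "rb S (x i) - x i \<le> c / real m" using ne_hr[OF NE i, of "x i"] i pay unfolding S_def by auto
  have ce: "c = (x i - lb S (x i)) + (rb S (x i) - x i)" unfolding c_def cw_def by simp
  have "c \<le> 2 * (c / real m)" using hl hr ce by linarith
  hence "c * real m \<le> 2 * c" using m1 by (simp add: field_simps)
  hence "real m \<le> 2" using cpos by (simp add: mult.commute)
  thus "mult n x (x i) = 1 \<or> mult n x (x i) = 2" using m1 unfolding m_def by linarith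
  have H: "Hm S \<le> c / real m" using ne_H[OF NE i] pay unfolding S_def by simp
  have HH: "x i - lb S (x i) \<le> Hm S" "rb S (x i) - x i \<le> Hm S" using H_ge[OF fin xi(1)] by auto
  show "mult n x (x i) = 2 \<Longrightarrow> x i - lb S (x i) = Hm S \<and> rb S (x i) - x i = Hm S"
  proof -
    assume "mult n x (x i) = 2"
    hence "Hm S \<le> c / 2" using H unfolding m_def by simp
    thus ?thesis using HH ce by linarith
  qed
  show "mult n x (x i) = 1 \<Longrightarrow> Hm S \<le> cw S (x i)" using H unfolding m_def c_def by simp
qed

lemma ne_end_min:
  fixes x :: "nat \<Rightarrow> real" and n i :: nat
  assumes NE: "is_NE n x" and i: "i < n" and mn: "\<And>s. s \<in> x ` {..<n} \<Longrightarrow> x i \<le> s"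
    and other: "s0 \<in> x ` {..<n}" "s0 \<noteq> x i"
  shows "mult n x (x i) = 2"
proof (rule ccontr)
  assume "mult n x (x i) \<noteq> 2"
  hence m1: "mult n x (x i) = 1" using ne_mult(1)[OF NE i] by auto
  define S where "S = x ` {..<n}"
  define Q where "Q = x ` ({..<n} - {i})"
  define l where "l = x i"
  have vals: "\<And>j. j < n \<Longrightarrow> x j \<in> {0..1}" using ne_vals[OF NE] by auto
  have fin: "finite S" and sub: "S \<subseteq> {0..1}" unfolding S_def using vals by auto
  have QS: "Q = S - {l}" unfolding Q_def S_def l_def using Q_single[OF i m1] .
  have finQ: "finite Q" using QS fin by simp
  have lS: "l \<in> S" unfolding l_def S_def using i by simp
  have ex: "\<exists>s\<in>S. l < s" using other mn unfolding S_def l_def by force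
  then obtain r where r: "r \<in> S" "l < r" "\<forall>s\<in>S. l < s \<longrightarrow> r \<le> s" "rb S l = (l + r) / 2"
    using rb_cases[OF fin, of l] by force
  have lb0: "lb S l = 0" using mn unfolding S_def l_def by (intro lb_none) auto
  have pay: "payoff n x i = (l + r) / 2"
    using payoff_eq[of n x i, OF vals i] m1 r(4) lb0 unfolding cw_def S_def l_def by simp
  define z where "z = (l + r) / 2"
  have lz: "l < z" "z < r" using r(2) unfolding z_def by auto
  have z01: "z \<in> {0..1}" using lS r(1) sub lz by auto
  have Qge: "\<And>s. s \<in> Q \<Longrightarrow> r \<le> s"
  proof -
    fix s assume "s \<in> Q"
    hence "s \<in> S" "s \<noteq> l" using QS by auto
    hence "l < s" using mn unfolding S_def l_def by force
    thus "r \<le> s" using r(3) \<open>s \<in> S\<close> by auto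
  qed
  have zQ: "z \<notin> Q" using Qge lz by force
  define T where "T = insert z Q"
  have finT: "finite T" unfolding T_def using finQ by simp
  have rQ: "r \<in> Q" using QS r lz by auto
  have lT: "lb T z = 0"
  proof (rule lb_none)
    fix s assume "s \<in> T"
    thus "z \<le> s"
    proof (cases "s = z")
      case False thus ?thesis using \<open>s \<in> T\<close> Qge[of s] lz unfolding T_def by auto
    qed simp
  qed
  have rT: "rb T z = (z + r) / 2"
  proof (rule rb_eq[OF finT _ lz(2)])
    show "r \<in> T" unfolding T_def using rQ by simp
    fix s assume "s \<in> T" "z < s"
    thus "r \<le> s" using Qge unfolding T_def by auto
  qed
  have "payoff n (x(i := z)) i = cw T z"
    using dev_new[OF vals i z01] zQ unfolding T_def Q_def by simp
  also have "\<dots> = (z + r) / 2" using lT rT unfolding cw_def by simp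
  finally have "payoff n (x(i := z)) i = (z + r) / 2" .
  moreover have "(z + r) / 2 > (l + r) / 2" using lz by simp
  ultimately show False using ne_dev[OF NE i z01] pay by simp
qed

lemma ne_end_max:
  fixes x :: "nat \<Rightarrow> real" and n i :: nat
  assumes NE: "is_NE n x" and i: "i < n" and mx: "\<And>s. s \<in> x ` {..<n} \<Longrightarrow> s \<le> x i"
    and other: "s0 \<in> x ` {..<n}" "s0 \<noteq> x i"
  shows "mult n x (x i) = 2"
proof (rule ccontr)
  assume "mult n x (x i) \<noteq> 2"
  hence m1: "mult n x (x i) = 1" using ne_mult(1)[OF NE i] by auto
  define S where "S = x ` {..<n}"
  define Q where "Q = x ` ({..<n} - {i})"
  define l where "l = x i"
  have vals: "\<And>j. j < n \<Longrightarrow> x j \<in> {0..1}" using ne_vals[OF NE] by auto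
  have fin: "finite S" and sub: "S \<subseteq> {0..1}" unfolding S_def using vals by auto
  have QS: "Q = S - {l}" unfolding Q_def S_def l_def using Q_single[OF i m1] .
  have finQ: "finite Q" using QS fin by simp
  have lS: "l \<in> S" unfolding l_def S_def using i by simp
  have ex: "\<exists>s\<in>S. s < l" using other mx unfolding S_def l_def by force
  then obtain r where r: "r \<in> S" "r < l" "\<forall>s\<in>S. s < l \<longrightarrow> s \<le> r" "lb S l = (l + r) / 2"
    using lb_cases[OF fin, of l] by force
  have rb1: "rb S l = 1" using mx unfolding S_def l_def by (intro rb_none) auto
  have pay: "payoff n x i = 1 - (l + r) / 2"
    using payoff_eq[of n x i, OF vals i] m1 r(4) rb1 unfolding cw_def S_def l_def by simp
  define z where "z = (l + r) / 2"
  have lz: "r < z" "z < l" using r(2) unfolding z_def by auto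
  have z01: "z \<in> {0..1}" using lS r(1) sub lz by auto
  have Qle: "\<And>s. s \<in> Q \<Longrightarrow> s \<le> r"
  proof -
    fix s assume "s \<in> Q"
    hence "s \<in> S" "s \<noteq> l" using QS by auto
    hence "s < l" using mx unfolding S_def l_def by force
    thus "s \<le> r" using r(3) \<open>s \<in> S\<close> by auto
  qed
  have zQ: "z \<notin> Q" using Qle lz by force
  define T where "T = insert z Q"
  have finT: "finite T" unfolding T_def using finQ by simp
  have rQ: "r \<in> Q" using QS r lz by auto
  have rT: "rb T z = 1"
  proof (rule rb_none)
    fix s assume "s \<in> T"
    thus "s \<le> z"
    proof (cases "s = z")
      case False thus ?thesis using \<open>s \<in> T\<close> Qle[of s] lz unfolding T_def by auto
    qed simp
  qed
  have lT: "lb T z = (z + r) / 2"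
  proof (rule lb_eq[OF finT _ lz(1)])
    show "r \<in> T" unfolding T_def using rQ by simp
    fix s assume "s \<in> T" "s < z"
    thus "s \<le> r" using Qle unfolding T_def by auto
  qed
  have "payoff n (x(i := z)) i = cw T z"
    using dev_new[OF vals i z01] zQ unfolding T_def Q_def by simp
  also have "\<dots> = 1 - (z + r) / 2" using lT rT unfolding cw_def by simp
  finally have "payoff n (x(i := z)) i = 1 - (z + r) / 2" .
  moreover have "1 - (z + r) / 2 > 1 - (l + r) / 2" using lz by simp
  ultimately show False using ne_dev[OF NE i z01] pay by simp
qed

lemma seq_odd:
  fixes hl hr :: "nat \<Rightarrow> real" and m :: "nat \<Rightarrow> nat" and H :: real
  assumes k: "0 < k"
    and m12: "\<And>j. j < k \<Longrightarrow> m j = 1 \<or> m j = 2"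
    and m2: "\<And>j. j < k \<Longrightarrow> m j = 2 \<Longrightarrow> hl j = H \<and> hr j = H"
    and m1: "\<And>j. j < k \<Longrightarrow> m j = 1 \<Longrightarrow> H \<le> hl j + hr j"
    and e0: "m 0 = 2" and e1: "m (k - 1) = 2"
    and step: "\<And>j. Suc j < k \<Longrightarrow> hl (Suc j) = hr j"
    and odd: "odd (\<Sum>j<k. m j)"
  shows "H \<le> (\<Sum>j<k. hl j + hr j) - real (\<Sum>j<k. m j) * H"
proof -
  define Q where "Q j = (\<Sum>i<j. hl i + hr i) - real (\<Sum>i<j. m i) * H" for j
  have inv: "(odd (\<Sum>i<j. m i) \<longrightarrow> hr (j - 1) \<le> Q j) \<and> (even (\<Sum>i<j. m i) \<longrightarrow> H - hr (j - 1) \<le> Q j)"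
    if "1 \<le> j" "j \<le> k" for j
    using that
  proof (induction j)
    case 0 thus ?case by simp
  next
    case (Suc j)
    show ?case
    proof (cases "j = 0")
      case True
      thus ?thesis using m2[OF k e0] e0 unfolding Q_def by simp
    next
      case False
      have jk: "j < k" using Suc by simp
      have IH: "(odd (\<Sum>i<j. m i) \<longrightarrow> hr (j - 1) \<le> Q j) \<and> (even (\<Sum>i<j. m i) \<longrightarrow> H - hr (j - 1) \<le> Q j)"
        using Suc False by simp
      have hlj: "hl j = hr (j - 1)" using step[of "j - 1"] False jk by simp
      have Qs: "Q (Suc j) = Q j + hl j + hr j - real (m j) * H" unfolding Q_def by (simp add: algebra_simps)
      have cs: "(\<Sum>i<Suc j. m i) = (\<Sum>i<j. m i) + m j" by simp
      consider "m j = 1" | "m j = 2" using m12[OF jk] by auto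
      thus ?thesis
      proof cases
        case 1
        have "H \<le> hl j + hr j" using m1[OF jk 1] .
        thus ?thesis using IH Qs cs 1 hlj by auto
      next
        case 2
        have "hl j = H" "hr j = H" using m2[OF jk 2] by auto
        thus ?thesis using IH Qs cs 2 hlj by auto
      qed
    qed
  qed
  from inv[of k] k odd have "hr (k - 1) \<le> Q k" by simp
  moreover have "hr (k - 1) = H" using m2[of "k - 1"] e1 k by simp
  ultimately show ?thesis unfolding Q_def by simp
qed



lemma ne_vals': "is_NE n x \<Longrightarrow> (\<And>j. j < n \<Longrightarrow> x j \<in> {0..1})"
  using ne_vals by blast

lemma ne_cost_le:
  fixes x :: "nat \<Rightarrow> real" and n :: nat
  assumes NE: "is_NE n x" and n: "0 < n"
  shows "social_cost n x \<le> Hm (x ` {..<n}) / 2"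
proof -
  define S where "S = x ` {..<n}"
  have vals: "\<And>j. j < n \<Longrightarrow> x j \<in> {0..1}" using ne_vals[OF NE] by auto
  have fin: "finite S" and sub: "S \<subseteq> {0..1}" and ne: "S \<noteq> {}" unfolding S_def using vals n by auto
  have "social_cost n x = (\<Sum>l\<in>S. cc S l)" using cost_eq[OF vals n] unfolding S_def by simp
  also have "\<dots> \<le> (\<Sum>l\<in>S. Hm S / 2 * cw S l)"
  proof (rule sum_mono)
    fix l assume l: "l \<in> S"
    have l01: "l \<in> {0..1}" using l sub by auto
    have a: "0 \<le> l - lb S l" "l - lb S l \<le> Hm S" using lb_bounds[OF fin sub l01] H_ge[OF fin l] by auto
    have b: "0 \<le> rb S l - l" "rb S l - l \<le> Hm S" using rb_bounds[OF fin sub l01] H_ge[OF fin l] by auto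
    have "(l - lb S l)^2 \<le> Hm S * (l - lb S l)" unfolding power2_eq_square by (rule mult_right_mono[OF a(2) a(1)])
    moreover have "(rb S l - l)^2 \<le> Hm S * (rb S l - l)" unfolding power2_eq_square by (rule mult_right_mono[OF b(2) b(1)])
    ultimately have "(l - lb S l)^2 + (rb S l - l)^2 \<le> Hm S * (l - lb S l) + Hm S * (rb S l - l)"
      by (rule add_mono)
    hence "((l - lb S l)^2 + (rb S l - l)^2) / 2 \<le> (Hm S * (l - lb S l) + Hm S * (rb S l - l)) / 2"
      by (rule divide_right_mono) simp
    moreover have "Hm S / 2 * cw S l = (Hm S * (l - lb S l) + Hm S * (rb S l - l)) / 2"
      unfolding cw_def by (simp add: algebra_simps)
    ultimately show "cc S l \<le> Hm S / 2 * cw S l" unfolding cc_def by simp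
  qed
  also have "\<dots> = Hm S / 2 * (\<Sum>l\<in>S. cw S l)" by (rule sum_distrib_left[symmetric])
  also have "\<dots> = Hm S / 2" using cw_sum[OF fin ne] by simp
  finally show ?thesis unfolding S_def .
qed

lemma ne_nH:
  fixes x :: "nat \<Rightarrow> real" and n :: nat
  assumes NE: "is_NE n x" and n: "0 < n"
  shows "real n * Hm (x ` {..<n}) \<le> 1"
proof -
  have vals: "\<And>j. j < n \<Longrightarrow> x j \<in> {0..1}" using ne_vals[OF NE] by auto
  have "real n * Hm (x ` {..<n}) = (\<Sum>i<n. Hm (x ` {..<n}))" by simp
  also have "\<dots> \<le> (\<Sum>i<n. payoff n x i)" by (rule sum_mono) (use ne_H[OF NE] in auto)
  also have "\<dots> = 1" using payoff_sum[OF vals n] .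
  finally show ?thesis .
qed

lemma ne_min_max:
  fixes x :: "nat \<Rightarrow> real" and n :: nat
  assumes NE: "is_NE n x" and c2: "2 \<le> card (x ` {..<n})"
  shows "mult n x (Min (x ` {..<n})) = 2" "mult n x (Max (x ` {..<n})) = 2"
    "Min (x ` {..<n}) \<noteq> Max (x ` {..<n})"
proof -
  define S where "S = x ` {..<n}"
  have fin: "finite S" unfolding S_def by simp
  have ne: "S \<noteq> {}" using c2 unfolding S_def by auto
  have mnS: "Min S \<in> S" and mxS: "Max S \<in> S" using fin ne by auto
  show neq: "Min S \<noteq> Max S" unfolding S_def
  proof
    assume eq: "Min (x ` {..<n}) = Max (x ` {..<n})"
    have "S \<subseteq> {Min S}"
    proof
      fix s assume "s \<in> S"
      hence "Min S \<le> s" "s \<le> Max S" using fin by auto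
      thus "s \<in> {Min S}" using eq unfolding S_def by simp
    qed
    hence "card S \<le> 1" using card_mono[of "{Min S}" S] by simp
    thus False using c2 unfolding S_def by simp
  qed
  obtain i where i: "i < n" "x i = Min S" using mnS unfolding S_def by auto
  obtain j where j: "j < n" "x j = Max S" using mxS unfolding S_def by auto
  have "mult n x (x i) = 2"
    by (rule ne_end_min[OF NE i(1), of "Max S"]) (use i fin mxS neq in \<open>auto simp: S_def\<close>)
  thus "mult n x (Min (x ` {..<n})) = 2" using i unfolding S_def by simp
  have "mult n x (x j) = 2"
    by (rule ne_end_max[OF NE j(1), of "Min S"]) (use j fin mnS neq in \<open>auto simp: S_def\<close>)
  thus "mult n x (Max (x ` {..<n})) = 2" using j unfolding S_def by simp
qed

lemma ne_card:
  fixes x :: "nat \<Rightarrow> real" and n :: nat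
  assumes NE: "is_NE n x" and c2: "2 \<le> card (x ` {..<n})"
  shows "card (x ` {..<n}) + 2 \<le> n"
proof -
  define S where "S = x ` {..<n}"
  have fin: "finite S" unfolding S_def by simp
  have ne: "S \<noteq> {}" using c2 unfolding S_def by auto
  have mnS: "Min S \<in> S" and mxS: "Max S \<in> S" using fin ne by auto
  note MM = ne_min_max[OF NE c2, folded S_def]
  define R where "R = S - {Min S} - {Max S}"
  have finR: "finite R" unfolding R_def using fin by simp
  have A: "n = (\<Sum>l\<in>S. mult n x l)" using mult_sum[where x=x and n=n] unfolding S_def by simp
  have A2: "(\<Sum>l\<in>S. mult n x l) = mult n x (Min S) + (\<Sum>l\<in>S - {Min S}. mult n x l)"
    using sum.remove[OF fin mnS] by simp
  have A3: "(\<Sum>l\<in>S - {Min S}. mult n x l) = mult n x (Max S) + (\<Sum>l\<in>R. mult n x l)"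
    using sum.remove[of "S - {Min S}" "Max S"] fin mxS MM(3) unfolding R_def by simp
  have B: "card R \<le> (\<Sum>l\<in>R. mult n x l)"
  proof -
    have "card R = (\<Sum>l\<in>R. (1::nat))" by simp
    also have "\<dots> \<le> (\<Sum>l\<in>R. mult n x l)"
    proof (rule sum_mono)
      fix l assume "l \<in> R"
      hence "l \<in> x ` {..<n}" unfolding R_def S_def by simp
      thus "1 \<le> mult n x l" using mult_pos[where x=x and n=n and l=l] by simp
    qed
    finally show ?thesis .
  qed
  have C: "card R + 2 = card S" unfolding R_def
    using fin mnS mxS MM(3) c2 by (simp add: card_Diff_singleton_if S_def)
  show ?thesis using A A2 A3 B C MM(1,2) unfolding S_def by linarith
qed

lemma ne_card2:
  fixes x :: "nat \<Rightarrow> real" and n :: nat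
  assumes NE: "is_NE n x" and n: "3 \<le> n"
  shows "2 \<le> card (x ` {..<n})"
proof (rule ccontr)
  assume "\<not> ?thesis"
  moreover have "card (x ` {..<n}) \<noteq> 0"
  proof -
    have "0 \<in> {..<n}" using n by simp
    hence "x 0 \<in> x ` {..<n}" by blast
    thus ?thesis by (auto simp: card_eq_0_iff)
  qed
  ultimately have "card (x ` {..<n}) = 1" by linarith
  then obtain a where a: "x ` {..<n} = {a}" by (rule card_1_singletonE)
  have "mult n x a = n"
  proof -
    have "{j \<in> {..<n}. x j = a} = {..<n}" using a by auto
    thus ?thesis unfolding mult_def by simp
  qed
  moreover have "0 < n" using n by simp
  hence "x 0 = a" using a by auto
  ultimately have "mult n x (x 0) = n" by simp
  thus False using ne_mult(1)[OF NE, of 0] n by auto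
qed

lemma ne_odd:
  fixes x :: "nat \<Rightarrow> real" and n :: nat
  assumes NE: "is_NE n x" and n: "3 \<le> n" and odd: "odd n"
  shows "real (n + 1) * Hm (x ` {..<n}) \<le> 1"
proof -
  define S where "S = x ` {..<n}"
  define xs where "xs = sorted_list_of_set S"
  define k where "k = card S"
  define H where "H = Hm S"
  have vals: "\<And>j. j < n \<Longrightarrow> x j \<in> {0..1}" using ne_vals[OF NE] by auto
  have "0 \<in> {..<n}" using n by simp
  hence fin: "finite S" and ne: "S \<noteq> {}" unfolding S_def by auto
  note SF = sl_facts[OF fin, folded xs_def k_def]
  have k2: "2 \<le> k" using ne_card2[OF NE n] unfolding k_def S_def .
  have idx: "\<exists>i<n. x i = xs ! j" if "j < k" for j using SF(2)[OF that] unfolding S_def by auto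
  define hl where "hl j = xs ! j - lb S (xs ! j)" for j
  define hr where "hr j = rb S (xs ! j) - xs ! j" for j
  define m where "m j = mult n x (xs ! j)" for j
  have sm: "(\<Sum>j<k. m j) = n"
    using sum_sl[OF fin, of "mult n x"] mult_sum[where x=x and n=n] unfolding m_def xs_def k_def S_def by simp
  have sc: "(\<Sum>j<k. hl j + hr j) = 1"
    using sum_sl[OF fin, of "cw S"] cw_sum[OF fin ne] unfolding hl_def hr_def xs_def k_def cw_def by simp
  have "H \<le> (\<Sum>j<k. hl j + hr j) - real (\<Sum>j<k. m j) * H"
  proof (rule seq_odd)
    show "0 < k" using k2 by simp
    show "m j = 1 \<or> m j = 2" if "j < k" for j
    proof -
      note th = that
      obtain i where i: "i < n" "x i = xs ! j" using idx[OF th] by blast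
      have "mult n x (x i) = 1 \<or> mult n x (x i) = 2" by (rule ne_mult(1)[OF NE i(1)])
      thus ?thesis using i unfolding m_def by simp
    qed
    show "hl j = H \<and> hr j = H" if "j < k" "m j = 2" for j
    proof -
      note th = that
      obtain i where i: "i < n" "x i = xs ! j" using idx[OF th(1)] by blast
      have "mult n x (x i) = 2" using th(2) i unfolding m_def by simp
      from ne_mult(2)[OF NE i(1) this] show ?thesis using i unfolding hl_def hr_def H_def S_def by simp
    qed
    show "H \<le> hl j + hr j" if "j < k" "m j = 1" for j
    proof -
      note th = that
      obtain i where i: "i < n" "x i = xs ! j" using idx[OF th(1)] by blast
      have "mult n x (x i) = 1" using th(2) i unfolding m_def by simp
      from ne_mult(3)[OF NE i(1) this] show ?thesis using i unfolding hl_def hr_def H_def S_def cw_def by simp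
    qed
    show "m 0 = 2"
    proof -
      obtain i where i: "i < n" "x i = xs ! 0" using idx[of 0] k2 by auto
      have "mult n x (x i) = 2"
      proof (rule ne_end_min[OF NE i(1), of "xs ! (k - 1)"])
        show "\<And>s. s \<in> x ` {..<n} \<Longrightarrow> x i \<le> s"
        proof -
          fix s assume "s \<in> x ` {..<n}"
          then obtain j where "j < k" "s = xs ! j" using SF(3) unfolding S_def by blast
          thus "x i \<le> s" using SF(4)[of 0 j] k2 i by (cases j) (auto simp: k_def)
        qed
        show "xs ! (k - 1) \<in> x ` {..<n}" using SF(2)[of "k - 1"] k2 unfolding S_def k_def by auto
        show "xs ! (k - 1) \<noteq> x i" using SF(4)[of 0 "k - 1"] k2 i unfolding k_def by auto
      qed
      thus ?thesis using i unfolding m_def by simp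
    qed
    show "m (k - 1) = 2"
    proof -
      obtain i where i: "i < n" "x i = xs ! (k - 1)" using idx[of "k - 1"] k2 by auto
      have "mult n x (x i) = 2"
      proof (rule ne_end_max[OF NE i(1), of "xs ! 0"])
        show "\<And>s. s \<in> x ` {..<n} \<Longrightarrow> s \<le> x i"
        proof -
          fix s assume "s \<in> x ` {..<n}"
          then obtain j where "j < k" "s = xs ! j" using SF(3) unfolding S_def by blast
          thus "s \<le> x i" using SF(4)[of j "k - 1"] k2 i
            by (cases "j = k - 1") auto
        qed
        show "xs ! 0 \<in> x ` {..<n}" using SF(2)[of 0] k2 unfolding S_def k_def by auto
        show "xs ! 0 \<noteq> x i" using SF(4)[of 0 "k - 1"] k2 i unfolding k_def by auto
      qed
      thus ?thesis using i unfolding m_def by simp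
    qed
    show "hl (Suc j) = hr j" if "Suc j < k" for j
      using sl_step[OF fin, of j] that unfolding hl_def hr_def xs_def k_def by simp
    show "odd (\<Sum>j<k. m j)" using sm odd by simp
  qed
  hence "H \<le> 1 - real n * H" using sm sc by simp
  thus ?thesis unfolding H_def S_def by (simp add: algebra_simps)
qed



definition gK :: "nat \<Rightarrow> nat \<Rightarrow> real" where
  "gK K a = real (2 * a + 1) / (2 * real K)"

lemma gK_diff: "0 < K \<Longrightarrow> gK K b - gK K a = (real b - real a) / real K"
  unfolding gK_def by (simp add: field_simps)

lemma gK_less: "0 < K \<Longrightarrow> gK K a < gK K b \<longleftrightarrow> a < b"
  unfolding gK_def by (simp add: divide_less_cancel)

lemma gK_le: "0 < K \<Longrightarrow> gK K a \<le> gK K b \<longleftrightarrow> a \<le> b"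
  unfolding gK_def by (simp add: divide_le_cancel)

lemma gK_inj: "0 < K \<Longrightarrow> gK K a = gK K b \<longleftrightarrow> a = b"
  using gK_le[of K a b] gK_le[of K b a] by auto

lemma gK_01: "0 < K \<Longrightarrow> a < K \<Longrightarrow> gK K a \<in> {0..1}"
  unfolding gK_def by (auto simp: field_simps)

lemma gK_lb:
  assumes K: "0 < K" and j: "j < K"
  shows "lb (gK K ` {..<K}) (gK K j) = real j / real K"
proof (cases "j = 0")
  case True
  have "lb (gK K ` {..<K}) (gK K j) = 0"
    by (rule lb_none) (use True gK_le[OF K] in auto)
  thus ?thesis using True by simp
next
  case False
  have "lb (gK K ` {..<K}) (gK K j) = (gK K j + gK K (j - 1)) / 2"
  proof (rule lb_eq)
    show "gK K (j - 1) \<in> gK K ` {..<K}" using j by auto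
    show "gK K (j - 1) < gK K j" using gK_less[OF K] False by simp
    fix s assume "s \<in> gK K ` {..<K}" "s < gK K j"
    then obtain a where "a < K" "s = gK K a" "a < j" using gK_less[OF K] by auto
    thus "s \<le> gK K (j - 1)" using gK_le[OF K] by simp
  qed simp
  also have "\<dots> = real j / real K" using False K unfolding gK_def
    by (simp add: field_simps of_nat_diff)
  finally show ?thesis .
qed

lemma gK_rb:
  assumes K: "0 < K" and j: "j < K"
  shows "rb (gK K ` {..<K}) (gK K j) = (real j + 1) / real K"
proof (cases "j = K - 1")
  case True
  have "rb (gK K ` {..<K}) (gK K j) = 1"
    by (rule rb_none) (use True gK_le[OF K] in auto)
  thus ?thesis using True K by (simp add: of_nat_diff)
next
  case False
  have "rb (gK K ` {..<K}) (gK K j) = (gK K j + gK K (j + 1)) / 2"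
  proof (rule rb_eq)
    show "gK K (j + 1) \<in> gK K ` {..<K}" using j False by auto
    show "gK K j < gK K (j + 1)" using gK_less[OF K] by simp
    fix s assume "s \<in> gK K ` {..<K}" "gK K j < s"
    then obtain a where "a < K" "s = gK K a" "j < a" using gK_less[OF K] by auto
    thus "gK K (j + 1) \<le> s" using gK_le[OF K] by simp
  qed simp
  also have "\<dots> = (real j + 1) / real K" using K unfolding gK_def
    by (simp add: field_simps)
  finally show ?thesis .
qed

lemma ap_cost:
  fixes f :: "nat \<Rightarrow> nat" and x :: "nat \<Rightarrow> real"
  assumes K: "0 < K" and n: "0 < n" and surj: "f ` {..<n} = {..<K}"
    and xd: "\<And>i. i < n \<Longrightarrow> x i = gK K (f i)"
  shows "social_cost n x = 1 / (4 * real K)"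
proof -
  have S: "x ` {..<n} = gK K ` {..<K}"
  proof -
    have "x ` {..<n} = gK K ` f ` {..<n}" using xd by (auto simp: image_iff)
    thus ?thesis using surj by simp
  qed
  have vals: "\<And>j. j < n \<Longrightarrow> x j \<in> {0..1}" using xd gK_01[OF K] surj by auto
  have "social_cost n x = (\<Sum>l\<in>gK K ` {..<K}. cc (gK K ` {..<K}) l)" using cost_eq[OF vals n] S by simp
  also have "\<dots> = (\<Sum>j<K. cc (gK K ` {..<K}) (gK K j))"
    by (rule sum.reindex_cong[where l = "gK K"]) (auto simp: inj_on_def gK_inj[OF K])
  also have "\<dots> = (\<Sum>j<K. 1 / (4 * real K ^ 2))"
  proof (rule sum.cong[OF refl])
    fix j assume "j \<in> {..<K}"
    hence j: "j < K" by simp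
    show "cc (gK K ` {..<K}) (gK K j) = 1 / (4 * real K ^ 2)"
      unfolding cc_def gK_lb[OF K j] gK_rb[OF K j] using K unfolding gK_def
      by (simp add: field_simps power2_eq_square)
  qed
  also have "\<dots> = 1 / (4 * real K)" using K by (simp add: power2_eq_square)
  finally show ?thesis .
qed

lemma ap_ne:
  fixes f :: "nat \<Rightarrow> nat" and x :: "nat \<Rightarrow> real"
  assumes K: "0 < K" and n: "2 \<le> n" and surj: "f ` {..<n} = {..<K}"
    and xd: "x = (\<lambda>i. if i < n then gK K (f i) else undefined)"
    and fib: "\<And>i. i < n \<Longrightarrow> card {j \<in> {..<n}. f j = f i} = 1 \<or> card {j \<in> {..<n}. f j = f i} = 2"
    and ends: "\<And>i. i < n \<Longrightarrow> card {j \<in> {..<n}. f j = f i} = 1 \<Longrightarrow> 0 < f i \<and> f i < K - 1"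
  shows "is_NE n x"
proof -
  define S where "S = gK K ` {..<K}"
  have xi: "\<And>i. i < n \<Longrightarrow> x i = gK K (f i)" using xd by simp
  have fK: "\<And>i. i < n \<Longrightarrow> f i < K" using surj by auto
  have Sx: "x ` {..<n} = S"
  proof -
    have "x ` {..<n} = gK K ` f ` {..<n}" using xi by (auto simp: image_iff)
    thus ?thesis using surj unfolding S_def by simp
  qed
  have vals: "\<And>j. j < n \<Longrightarrow> x j \<in> {0..1}" using xi gK_01[OF K] fK by auto
  have prof: "x \<in> profiles n" unfolding profiles_def using vals xd by (auto simp: PiE_iff extensional_def)
  have multx: "mult n x (x i) = card {j \<in> {..<n}. f j = f i}" if "i < n" for i
  proof -
    have "{j \<in> {..<n}. x j = x i} = {j \<in> {..<n}. f j = f i}" using xi that gK_inj[OF K] by auto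
    thus ?thesis unfolding mult_def by simp
  qed
  have e0: "gK K 0 \<in> S" "gK K (K - 1) \<in> S" unfolding S_def using K by auto
  have g0: "gK K 0 = 1 / (2 * real K)" unfolding gK_def by simp
  have g1: "gK K (K - 1) = 1 - 1 / (2 * real K)" unfolding gK_def using K by (simp add: field_simps of_nat_diff)
  have Sof: "\<And>s. s \<in> S \<Longrightarrow> \<exists>a<K. s = gK K a" unfolding S_def by auto
  show ?thesis unfolding is_NE_def
  proof (intro conjI prof allI impI ballI)
    fix i z assume i: "i < n" and z: "(z::real) \<in> {0..1}"
    define Q where "Q = x ` ({..<n} - {i})"
    have cw1: "cw S (x i) = 1 / real K"
      using xi[OF i] gK_lb[OF K fK[OF i]] gK_rb[OF K fK[OF i]] unfolding cw_def S_def
      by (simp add: diff_divide_distrib[symmetric])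
    have pay: "payoff n x i = (1 / real K) / real (mult n x (x i))"
      using payoff_eq[of n x i, OF vals i] Sx cw1 by simp
    have Qne: "Q \<noteq> {}"
    proof -
      obtain j where "j < n" "j \<noteq> i" using n i by (metis One_nat_def Suc_1 Suc_le_lessD less_Suc_eq nat_neq_iff zero_less_Suc) 
      thus ?thesis unfolding Q_def by auto
    qed
    show "payoff n (x(i := z)) i \<le> payoff n x i"
    proof (cases "mult n x (x i) = 1")
      case False
      hence m2: "mult n x (x i) = 2" using fib[OF i] multx[OF i] by auto
      have QS: "Q = S" unfolding Q_def using Q_multi[OF i False] Sx by simp
      have "payoff n (x(i := z)) i \<le> 1 / (2 * real K)"
      proof (rule dev_bound[OF vals i z Qne[unfolded Q_def]])
        fix p q assume pq: "p \<in> x ` ({..<n} - {i})" "q \<in> x ` ({..<n} - {i})" "p < q"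
          "\<forall>r\<in>x ` ({..<n} - {i}). r \<le> p \<or> q \<le> r"
        obtain a where a: "a < K" "p = gK K a" using Sof pq(1) QS unfolding Q_def by auto
        obtain b where b: "b < K" "q = gK K b" using Sof pq(2) QS unfolding Q_def by auto
        have ab: "a < b" using pq(3) a b gK_less[OF K] by simp
        have "b \<le> a + 1"
        proof (rule ccontr)
          assume "\<not> ?thesis"
          hence "gK K (a + 1) \<in> Q" "p < gK K (a + 1)" "gK K (a + 1) < q"
            using a b QS gK_less[OF K] unfolding S_def by auto
          thus False using pq(4) unfolding Q_def by force
        qed
        hence "real b - real a \<le> 1" by simp
        thus "q - p \<le> 2 * (1 / (2 * real K))" using gK_diff[OF K, of b a] a b K
          by (simp add: divide_right_mono)
      next
        show "\<exists>q\<in>x ` ({..<n} - {i}). q \<le> 1 / (2 * real K)" using e0 g0 QS unfolding Q_def by auto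
        show "\<exists>q\<in>x ` ({..<n} - {i}). 1 - 1 / (2 * real K) \<le> q" using e0 g1 QS unfolding Q_def by auto
      qed
      thus ?thesis using pay m2 by simp
    next
      case True
      hence c1: "card {j \<in> {..<n}. f j = f i} = 1" using multx[OF i] by simp
      have fi: "0 < f i" "f i < K - 1" using ends[OF i c1] by auto
      have QS: "Q = S - {gK K (f i)}" unfolding Q_def using Q_single[OF i True] Sx xi[OF i] by simp
      have "payoff n (x(i := z)) i \<le> 1 / real K"
      proof (rule dev_bound[OF vals i z Qne[unfolded Q_def]])
        fix p q assume pq: "p \<in> x ` ({..<n} - {i})" "q \<in> x ` ({..<n} - {i})" "p < q"
          "\<forall>r\<in>x ` ({..<n} - {i}). r \<le> p \<or> q \<le> r"
        obtain a where a: "a < K" "p = gK K a" using Sof pq(1) QS unfolding Q_def by auto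
        obtain b where b: "b < K" "q = gK K b" using Sof pq(2) QS unfolding Q_def by auto
        have ab: "a < b" using pq(3) a b gK_less[OF K] by simp
        have "b \<le> a + 2"
        proof (rule ccontr)
          assume nb: "\<not> ?thesis"
          have in1: "gK K (a + 1) \<in> S" "gK K (a + 2) \<in> S" using nb b unfolding S_def by auto
          have btw: "p < gK K (a + 1)" "gK K (a + 1) < q" "p < gK K (a + 2)" "gK K (a + 2) < q"
            using a b nb gK_less[OF K] by auto
          have "gK K (a + 1) \<noteq> gK K (a + 2)" using gK_inj[OF K] by simp
          hence "gK K (a + 1) \<in> Q \<or> gK K (a + 2) \<in> Q" using in1 QS by auto
          thus False using pq(4) btw unfolding Q_def by force
        qed
        hence "real b - real a \<le> 2" by simp
        thus "q - p \<le> 2 * (1 / real K)" using gK_diff[OF K, of b a] a b K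
          by (simp add: divide_right_mono)
      next
        have "gK K 0 \<in> Q" using e0 QS gK_inj[OF K] fi by auto
        moreover have "gK K 0 \<le> 1 / real K" using g0 K by (simp add: frac_le)
        ultimately show "\<exists>q\<in>x ` ({..<n} - {i}). q \<le> 1 / real K" unfolding Q_def by auto
        have "gK K (K - 1) \<in> Q" using e0 QS gK_inj[OF K] fi by auto
        moreover have "1 - 1 / real K \<le> gK K (K - 1)" using g1 K by (simp add: frac_le)
        ultimately show "\<exists>q\<in>x ` ({..<n} - {i}). 1 - 1 / real K \<le> q" unfolding Q_def by auto
      qed
      thus ?thesis using pay True by simp
    qed
  qed
qed



lemma prof_vals: "x \<in> profiles n \<Longrightarrow> j < n \<Longrightarrow> x j \<in> {0..1}"
  using PiE_mem[of x "{..<n}" "\<lambda>_. {0..1::real}" j] unfolding profiles_def by simp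

lemma opt_cost:
  assumes n: "0 < n"
  shows "Inf (social_cost n ` profiles n) = 1 / (4 * real n)"
proof (rule cInf_eq_minimum)
  define x where "x = (\<lambda>i. if i < n then gK n i else undefined)"
  have xp: "x \<in> profiles n" unfolding profiles_def
  proof (rule PiE_I)
    fix i assume "i \<in> {..<n}" thus "x i \<in> {0..1}" unfolding x_def using gK_01[OF n] by simp
  next
    fix i assume "i \<notin> {..<n}" thus "x i = undefined" unfolding x_def by simp
  qed
  have "social_cost n x = 1 / (4 * real n)"
    by (rule ap_cost[OF n n, where f = id]) (simp_all add: x_def)
  hence "1 / (4 * real n) = social_cost n x" by simp
  thus "1 / (4 * real n) \<in> social_cost n ` profiles n" using xp by (rule image_eqI)
next
  fix c assume "c \<in> social_cost n ` profiles n"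
  then obtain x where x: "x \<in> profiles n" "c = social_cost n x" by auto
  have vals: "\<And>j. j < n \<Longrightarrow> x j \<in> {0..1}" using prof_vals[OF x(1)] .
  have c1: "1 \<le> card (x ` {..<n})" using n by (auto simp: Suc_le_eq card_gt_0_iff)
  have c2: "card (x ` {..<n}) \<le> n" using card_image_le[of "{..<n}" x] by simp
  have "1 / (4 * real n) \<le> 1 / (4 * real (card (x ` {..<n})))"
    using c1 c2 by (intro divide_left_mono) auto
  also have "\<dots> \<le> social_cost n x" using cost_lower[OF vals n] .
  finally show "1 / (4 * real n) \<le> c" using x by simp
qed

lemma d2: "(j::nat) div 2 = c \<longleftrightarrow> j = 2 * c \<or> j = 2 * c + 1" by presburger
lemma d3: "(i::nat) < 2 * m \<Longrightarrow> i div 2 < m" by presburger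
lemma d4: "((j::nat) + 1) div 2 = c \<longleftrightarrow> j + 1 = 2 * c \<or> j = 2 * c" by presburger
lemma d5: "(i::nat) + 1 < 2 * m \<Longrightarrow> (i + 1) div 2 < m" by presburger

lemma even_wit:
  assumes n: "2 \<le> n" "even n"
  shows "\<exists>x. is_NE n x \<and> social_cost n x = 1 / (2 * real n)"
proof -
  define K where "K = n div 2"
  have nK: "n = 2 * K" using n unfolding K_def by simp
  define f where "f i = i div 2" for i :: nat
  define x where "x = (\<lambda>i. if i < n then gK K (f i) else undefined)"
  have K: "0 < K" using n unfolding K_def by auto
  have fibE: "{j \<in> {..<n}. f j = c} = {2 * c, 2 * c + 1}" if "c < K" for c
    using that unfolding f_def nK d2 by auto
  have surj: "f ` {..<n} = {..<K}"
  proof (intro equalityI subsetI)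
    fix c assume "c \<in> f ` {..<n}"
    thus "c \<in> {..<K}" unfolding f_def nK using d3 by auto
  next
    fix c assume "c \<in> {..<K}"
    hence "2 * c < n" "f (2 * c) = c" unfolding nK f_def by auto
    thus "c \<in> f ` {..<n}" by (metis imageI lessThan_iff)
  qed
  have fK: "f i < K" if "i < n" for i using surj that by auto
  have fib: "card {j \<in> {..<n}. f j = f i} = 2" if "i < n" for i
    using fibE[OF fK[OF that]] by simp
  have "is_NE n x"
    by (rule ap_ne[OF K n(1) surj x_def]) (use fib in auto)
  moreover have "social_cost n x = 1 / (4 * real K)"
    by (rule ap_cost[OF K _ surj]) (use n in \<open>auto simp: x_def\<close>)
  moreover have "1 / (4 * real K) = 1 / (2 * real n)" using nK by simp
  ultimately show ?thesis by auto
qed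

lemma odd_wit:
  assumes n: "5 \<le> n" "odd n"
  shows "\<exists>x. is_NE n x \<and> social_cost n x = 1 / (2 * (real n + 1))"
proof -
  define K where "K = (n + 1) div 2"
  have nK: "n + 1 = 2 * K" using n unfolding K_def by simp
  have K3: "3 \<le> K" using n nK by simp
  define f where "f i = (if i < 2 then 0 else (i + 1) div 2)" for i :: nat
  define x where "x = (\<lambda>i. if i < n then gK K (f i) else undefined)"
  have K: "0 < K" using K3 by simp
  define F where "F c = (if c = 0 then {0, 1} else if c = 1 then {2} else {2 * c - 1, 2 * c})" for c :: nat
  have fibE: "{j \<in> {..<n}. f j = c} = F c" if "c < K" for c
  proof (intro equalityI subsetI)
    fix j assume j: "j \<in> {j \<in> {..<n}. f j = c}"
    show "j \<in> F c"
    proof (cases "j < 2")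
      case True
      hence "c = 0" using j unfolding f_def by simp
      moreover have "j = 0 \<or> j = 1" using True by arith
      ultimately show ?thesis unfolding F_def by auto
    next
      case False
      hence jc: "(j + 1) div 2 = c" using j unfolding f_def by simp
      hence d: "j + 1 = 2 * c \<or> j = 2 * c" unfolding d4 .
      have c1: "1 \<le> c" using jc False by presburger
      show ?thesis
      proof (cases "c = 1")
        case True
        hence "j = 2" using d False by arith
        thus ?thesis using True unfolding F_def by simp
      next
        case False
        hence "j = 2 * c - 1 \<or> j = 2 * c" using d c1 by arith
        thus ?thesis using False c1 unfolding F_def by auto
      qed
    qed
  next
    fix j assume j: "j \<in> F c"
    have cn: "2 * c < n" using that nK by simp
    show "j \<in> {j \<in> {..<n}. f j = c}"
    proof (cases "c = 0")
      case True
      hence "j = 0 \<or> j = 1" using j unfolding F_def by simp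
      hence "j < n" "f j = c" using n True unfolding f_def by auto
      thus ?thesis by simp
    next
      case c0: False
      show ?thesis
      proof (cases "c = 1")
        case True
        hence "j = 2" using j unfolding F_def by simp
        hence "j < n" "f j = c" using n True unfolding f_def by auto
        thus ?thesis by simp
      next
        case False
        hence jj: "j = 2 * c - 1 \<or> j = 2 * c" using j c0 unfolding F_def by simp
        have "\<not> j < 2" using jj c0 False by arith
        moreover have "(j + 1) div 2 = c" using jj c0 by (auto simp: d4)
        ultimately have "f j = c" unfolding f_def by simp
        moreover have "j < n" using jj cn by arith
        ultimately show ?thesis by simp
      qed
    qed
  qed
  have surj: "f ` {..<n} = {..<K}"
  proof (intro equalityI subsetI)
    fix c assume "c \<in> f ` {..<n}"
    then obtain i where i: "i < n" "c = f i" by auto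
    show "c \<in> {..<K}"
    proof (cases "i < 2")
      case True thus ?thesis using i K unfolding f_def by simp
    next
      case False
      have "i + 1 < 2 * K" using i nK by simp
      thus ?thesis using i False d5 unfolding f_def by simp
    qed
  next
    fix c assume c: "c \<in> {..<K}"
    show "c \<in> f ` {..<n}"
    proof (cases "c = 0")
      case True
      have "f 0 = c" unfolding f_def using True by simp
      moreover have "0 < n" using n by simp
      ultimately show ?thesis by (metis imageI lessThan_iff)
    next
      case False
      hence "2 * c < n" "f (2 * c) = c" using c nK unfolding f_def by auto
      thus ?thesis by (metis imageI lessThan_iff)
    qed
  qed
  have fK: "f i < K" if "i < n" for i using surj that by auto
  have cF: "card (F c) = (if c = 1 then 1 else 2)" for c
  proof -
    consider "c = 0" | "c = 1" | "2 \<le> c" by arith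
    thus ?thesis
    proof cases
      case 3
      hence "2 * c - 1 \<noteq> 2 * c" by arith
      thus ?thesis using 3 unfolding F_def by simp
    qed (simp_all add: F_def)
  qed
  have "is_NE n x"
  proof (rule ap_ne[OF K _ surj x_def])
    show "2 \<le> n" using n by simp
    fix i assume i: "i < n"
    have cfi: "card {j \<in> {..<n}. f j = f i} = card (F (f i))" using fibE[OF fK[OF i]] by simp
    show "card {j \<in> {..<n}. f j = f i} = 1 \<or> card {j \<in> {..<n}. f j = f i} = 2"
      unfolding cfi cF by simp
    assume c1: "card {j \<in> {..<n}. f j = f i} = 1"
    have "f i = 1"
    proof (rule ccontr)
      assume "f i \<noteq> 1"
      hence "card (F (f i)) = 2" unfolding cF by simp
      thus False using c1 cfi by simp
    qed
    thus "0 < f i \<and> f i < K - 1" using K3 by simp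
  qed
  moreover have "social_cost n x = 1 / (4 * real K)"
    by (rule ap_cost[OF K _ surj]) (use n in \<open>auto simp: x_def\<close>)
  moreover have "1 / (4 * real K) = 1 / (2 * (real n + 1))"
  proof -
    have "real n + 1 = 2 * real K" using nK by (metis of_nat_1 of_nat_add of_nat_mult of_nat_numeral)
    thus ?thesis by simp
  qed
  ultimately show ?thesis by auto
qed

lemma pos_wit:
  assumes n: "4 \<le> n"
  shows "\<exists>x. is_NE n x \<and> social_cost n x = 1 / (4 * (real n - 2))"
proof -
  define K where "K = n - 2"
  define f where "f i = (if i < 2 then 0 else if i = n - 1 then n - 3 else i - 1)" for i :: nat
  define x where "x = (\<lambda>i. if i < n then gK K (f i) else undefined)"
  have K: "0 < K" using n unfolding K_def by simp
  define F where "F c = (if c = 0 then {0, 1} else if c = n - 3 then {n - 2, n - 1} else {c + 1})" for c :: nat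
  have fibE: "{j \<in> {..<n}. f j = c} = F c" if "c < K" for c
  proof (intro equalityI subsetI)
    fix j assume j: "j \<in> {j \<in> {..<n}. f j = c}"
    hence jn: "j < n" and fj: "f j = c" by auto
    show "j \<in> F c"
    proof (cases "j < 2")
      case True
      hence "c = 0" using fj unfolding f_def by simp
      moreover have "j = 0 \<or> j = 1" using True by arith
      ultimately show ?thesis unfolding F_def by auto
    next
      case j2: False
      show ?thesis
      proof (cases "j = n - 1")
        case True
        hence "c = n - 3" using fj j2 unfolding f_def by simp
        moreover have "c \<noteq> 0" using \<open>c = n - 3\<close> n by arith
        ultimately show ?thesis using True unfolding F_def by simp
      next
        case False
        hence cj: "c = j - 1" using fj j2 unfolding f_def by simp
        have "c \<noteq> 0" using cj j2 by arith
        moreover have "j = c + 1" using cj j2 by arith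
        moreover have "c = n - 3 \<Longrightarrow> j = n - 2" using cj j2 n by arith
        ultimately show ?thesis unfolding F_def by auto
      qed
    qed
  next
    fix j assume j: "j \<in> F c"
    have cK: "c \<le> n - 3" using that unfolding K_def by arith
    show "j \<in> {j \<in> {..<n}. f j = c}"
    proof (cases "c = 0")
      case True
      hence "j = 0 \<or> j = 1" using j unfolding F_def by simp
      hence "j < n" "f j = c" using n True unfolding f_def by auto
      thus ?thesis by simp
    next
      case c0: False
      show ?thesis
      proof (cases "c = n - 3")
        case True
        hence "j = n - 2 \<or> j = n - 1" using j c0 unfolding F_def by simp
        moreover have "f (n - 2) = c" using n True unfolding f_def by simp
        moreover have "f (n - 1) = c" using n True unfolding f_def by simp
        moreover have "n - 2 < n" "n - 1 < n" using n by arith+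
        ultimately show ?thesis by auto
      next
        case False
        hence jj: "j = c + 1" using j c0 unfolding F_def by simp
        have "\<not> j < 2" "j \<noteq> n - 1" using jj c0 False cK by arith+
        hence "f j = c" unfolding f_def using jj by simp
        moreover have "j < n" using jj cK n by arith
        ultimately show ?thesis by simp
      qed
    qed
  qed
  have surj: "f ` {..<n} = {..<K}"
  proof (intro equalityI subsetI)
    fix c assume "c \<in> f ` {..<n}"
    then obtain i where i: "i < n" "c = f i" by auto
    have "f i < n - 2" using i n unfolding f_def by (auto; arith)
    thus "c \<in> {..<K}" using i unfolding K_def by simp
  next
    fix c assume c: "c \<in> {..<K}"
    show "c \<in> f ` {..<n}"
    proof (cases "c = 0")
      case True
      have "f 0 = c" unfolding f_def using True by simp
      moreover have "0 < n" using n by simp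
      ultimately show ?thesis by (metis imageI lessThan_iff)
    next
      case False
      have "c + 1 < n - 1" using c n unfolding K_def by auto
      hence "c + 1 < n" "f (c + 1) = c" using False unfolding f_def by auto
      thus ?thesis by (metis imageI lessThan_iff)
    qed
  qed
  have fK: "f i < K" if "i < n" for i using surj that by auto
  have cF: "card (F c) = (if c \<noteq> 0 \<and> c \<noteq> n - 3 then 1 else 2)" for c
  proof -
    have "n - 2 \<noteq> n - 1" using n by arith
    thus ?thesis unfolding F_def by simp
  qed
  have "is_NE n x"
  proof (rule ap_ne[OF K _ surj x_def])
    show "2 \<le> n" using n by simp
    fix i assume i: "i < n"
    have cfi: "card {j \<in> {..<n}. f j = f i} = card (F (f i))" using fibE[OF fK[OF i]] by simp
    show "card {j \<in> {..<n}. f j = f i} = 1 \<or> card {j \<in> {..<n}. f j = f i} = 2"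
      unfolding cfi cF by simp
    assume c1: "card {j \<in> {..<n}. f j = f i} = 1"
    have "f i \<noteq> 0 \<and> f i \<noteq> n - 3"
    proof (rule ccontr)
      assume "\<not> (f i \<noteq> 0 \<and> f i \<noteq> n - 3)"
      hence "card (F (f i)) = 2" unfolding cF by auto
      thus False using c1 cfi by simp
    qed
    thus "0 < f i \<and> f i < K - 1" using fK[OF i] unfolding K_def by auto
  qed
  moreover have "social_cost n x = 1 / (4 * real K)"
    by (rule ap_cost[OF K _ surj]) (use n in \<open>auto simp: x_def\<close>)
  moreover have "real K = real n - 2" using n unfolding K_def by (simp add: of_nat_diff)
  ultimately show ?thesis by auto
qed



lemma ne_cost_lower:
  assumes NE: "is_NE n x" and n: "0 < n"
  shows "1 / (4 * real (card (x ` {..<n}))) \<le> social_cost n x"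
  using cost_lower[OF ne_vals'[OF NE] n] by simp

lemma poa_even:
  assumes n: "2 \<le> n" "even n"
  shows "PoA n = 2"
proof -
  have n0: "0 < n" using n by simp
  obtain w where w: "is_NE n w" "social_cost n w = 1 / (2 * real n)" using even_wit[OF n] by blast
  have "Sup (social_cost n ` {x. is_NE n x}) = 1 / (2 * real n)"
  proof (rule cSup_eq_maximum)
    show "1 / (2 * real n) \<in> social_cost n ` {x. is_NE n x}" using w by (metis image_eqI mem_Collect_eq)
    fix c assume "c \<in> social_cost n ` {x. is_NE n x}"
    then obtain x where x: "is_NE n x" "c = social_cost n x" by auto
    have "c \<le> Hm (x ` {..<n}) / 2" using ne_cost_le[OF x(1) n0] x(2) by simp
    moreover have "Hm (x ` {..<n}) \<le> 1 / real n" using ne_nH[OF x(1) n0] n0 by (simp add: field_simps)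
    ultimately show "c \<le> 1 / (2 * real n)" by simp
  qed
  thus ?thesis unfolding PoA_def opt_cost[OF n0] using n0 by simp
qed

lemma poa_odd:
  assumes n: "3 < n" "odd n"
  shows "PoA n = 2 * real n / (real n + 1)"
proof -
  have n0: "0 < n" using n by simp
  have n5: "5 \<le> n" using n by presburger
  obtain w where w: "is_NE n w" "social_cost n w = 1 / (2 * (real n + 1))" using odd_wit[OF n5 n(2)] by blast
  have "Sup (social_cost n ` {x. is_NE n x}) = 1 / (2 * (real n + 1))"
  proof (rule cSup_eq_maximum)
    show "1 / (2 * (real n + 1)) \<in> social_cost n ` {x. is_NE n x}" using w by (metis image_eqI mem_Collect_eq)
    fix c assume "c \<in> social_cost n ` {x. is_NE n x}"
    then obtain x where x: "is_NE n x" "c = social_cost n x" by auto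
    have a: "c \<le> Hm (x ` {..<n}) / 2" using ne_cost_le[OF x(1) n0] x(2) by simp
    have "real (n + 1) * Hm (x ` {..<n}) \<le> 1" using ne_odd[OF x(1) _ n(2)] n by simp
    hence b: "Hm (x ` {..<n}) \<le> 1 / (real n + 1)" by (simp add: field_simps)
    have "Hm (x ` {..<n}) / 2 \<le> (1 / (real n + 1)) / 2"
      using b by (rule divide_right_mono) simp
    with a have "c \<le> (1 / (real n + 1)) / 2" by (rule order.trans)
    moreover have "(1 / (real n + 1)) / 2 = 1 / (2 * (real n + 1))" by simp
    ultimately show "c \<le> 1 / (2 * (real n + 1))" by (rule ord_le_eq_trans)
  qed
  hence "PoA n = (1 / (2 * (real n + 1))) / (1 / (4 * real n))" unfolding PoA_def opt_cost[OF n0] by (simp only:)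
  also have "\<dots> = 2 * real n / (real n + 1)" using n0 by (simp add: field_simps)
  finally show ?thesis .
qed

lemma pos_2: "PoS 2 = 2"
proof -
  obtain w where w: "is_NE 2 w" "social_cost 2 w = 1 / (2 * real (2::nat))" using even_wit[of 2] by auto
  have "Inf (social_cost 2 ` {x. is_NE 2 x}) = 1 / 4"
  proof (rule cInf_eq_minimum)
    show "1 / 4 \<in> social_cost 2 ` {x. is_NE 2 x}" using w by (metis image_eqI mem_Collect_eq of_nat_numeral times_divide_eq_right mult_2 numeral_Bit0 numeral_One one_add_one)
    fix c assume "c \<in> social_cost 2 ` {x. is_NE 2 x}"
    then obtain x where x: "is_NE 2 x" "c = social_cost 2 x" by auto
    have c1: "card (x ` {..<2}) \<le> 1"
    proof (rule ccontr)
      assume "\<not> ?thesis"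
      hence h2: "2 \<le> card (x ` {..<2})" by simp
      from ne_card[OF x(1) h2] h2 show False by linarith
    qed
    have c0: "1 \<le> card (x ` {..<2})"
    proof -
      have "x 0 \<in> x ` {..<2}" by (rule imageI) simp
      hence "x ` {..<2} \<noteq> {}" by blast
      moreover have "finite (x ` {..<2})" by simp
      ultimately have "0 < card (x ` {..<2})" by (simp only: card_gt_0_iff) simp
      thus ?thesis by simp
    qed
    have "card (x ` {..<2}) = 1" using c0 c1 by simp
    thus "1 / 4 \<le> c" using ne_cost_lower[OF x(1)] x(2) by simp
  qed
  moreover have "Inf (social_cost 2 ` profiles 2) = 1 / 8" using opt_cost[of 2] by simp
  ultimately have "PoS 2 = (1 / 4) / (1 / 8)" unfolding PoS_def by (simp only:)
  thus ?thesis by simp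
qed

lemma pos_ge4:
  assumes n: "4 \<le> n"
  shows "PoS n = real n / (real n - 2)"
proof -
  have n0: "0 < n" using n by simp
  obtain w where w: "is_NE n w" "social_cost n w = 1 / (4 * (real n - 2))" using pos_wit[OF n] by blast
  have "Inf (social_cost n ` {x. is_NE n x}) = 1 / (4 * (real n - 2))"
  proof (rule cInf_eq_minimum)
    show "1 / (4 * (real n - 2)) \<in> social_cost n ` {x. is_NE n x}" using w by (metis image_eqI mem_Collect_eq)
    fix c assume "c \<in> social_cost n ` {x. is_NE n x}"
    then obtain x where x: "is_NE n x" "c = social_cost n x" by auto
    have c2: "2 \<le> card (x ` {..<n})" using ne_card2[OF x(1)] n by simp
    have "card (x ` {..<n}) + 2 \<le> n" using ne_card[OF x(1) c2] .
    hence "real (card (x ` {..<n})) \<le> real n - 2" by linarith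
    moreover have "0 < real (card (x ` {..<n}))" using c2 by simp
    ultimately have "1 / (4 * (real n - 2)) \<le> 1 / (4 * real (card (x ` {..<n})))"
      by (intro divide_left_mono) auto
    also have "\<dots> \<le> c" using ne_cost_lower[OF x(1) n0] x(2) by simp
    finally show "1 / (4 * (real n - 2)) \<le> c" .
  qed
  moreover have "real n - 2 > 0" using n by simp
  moreover have "PoS n = (1 / (4 * (real n - 2))) / (1 / (4 * real n))"
    unfolding PoS_def opt_cost[OF n0] using calculation(1) by (simp only:)
  ultimately show ?thesis using n0 by (simp add: field_simps)
qed

theorem mainTheorem18:
  shows "(\<forall>n::nat. n \<ge> 2 \<and> even n \<longrightarrow> PoA n = 2)
       \<and> (\<forall>n::nat. n > 3 \<and> odd n \<longrightarrow> PoA n = 2 * real n / (real n + 1))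
       \<and> PoS 2 = 2
       \<and> (\<forall>n::nat. n \<ge> 4 \<longrightarrow> PoS n = real n / (real n - 2))"
  using poa_even poa_odd pos_2 pos_ge4 by blast


end
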